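(* Suppose that $\alpha_n=O\bigl((d_n+1)!^2\bigr)$ as $n\to\infty$. Then there is a constant $A>0$ such that $$\widetilde\chi(\Delta_n)=O\!\left(n\exp\!\left(-A\,\frac{\log n\,\log\log\log n}{\log\log n}\right)\right).$$
   Context: For a squarefree positive integer $k$ let $P(k)$ be its set of prime factors ($P(1)=\emptyset$). $\Delta_n$ is the abstract simplicial complex $\{P(k):1\le k\le n,\ k\text{ squarefree}\}$; a $d$-simplex is a member of cardinality $d+1$, $d_n=\dim\Delta_n$ is the largest such $d$, and $f^{\Delta_n}_{d_n}$ is the number of $d_n$-simplices. The reduced Euler characteristic is $\widetilde\chi(\Delta)=\sum_{\sigma\in\Delta}(-1)^{\#\sigma-1}$ (so $\widetilde\chi(\Delta_n)=-M(n)$, $M$ the Mertens function). For integers $i,d\ge -1$ define $f_{-1,-1}=1$, $f_{-1,d}=0$ for $d\ge0$, $f_{i,-1}=0$ for $i\ge0$, $f_{i,d}=(i+1)!\,S(d+1,i+1)$ for $i,d\ge0$ ($S$ = Stirling numbers of the second kind); for $d\ge0$ set $F_{d,d}=1$ and recursively for $-1\le i\le d-1$, $F_{i,d}=\frac{1}{(d+1)!-(i+1)!}\sum_{j=i+1}^{d}f_{i,j}F_{j,d}$; $F_d(z)=\sum_{i=-1}^dF_{i,d}z^{d-i}$ and $H_d(z)=F_d(z-1)=\sum_{i=0}^{d+1}H_{i,d}z^{d+1-i}$. For $n\ge6$ define $\alpha_n=\dfrac{\widetilde\chi(\Delta_n)}{H_{1,d_n}\,f^{\Delta_n}_{d_n}}$.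 *)

theory Defs
  imports "HOL-Computational_Algebra.Computational_Algebra" "HOL-Combinatorics.Stirling"
    "HOL-Library.Landau_Symbols" Complex_Main
begin

definition Delta :: "nat \<Rightarrow> nat set set" where
  "Delta n = {prime_factors k | k. 1 \<le> k \<and> k \<le> n \<and> squarefree k}"

text \<open>Reduced Euler characteristic: sum over faces of (-1)^(card sigma - 1), where the exponent -1 (empty face) gives -1.\<close>
definition red_euler :: "nat set set \<Rightarrow> int" where
  "red_euler D = (\<Sum>\<sigma>\<in>D. if card \<sigma> = 0 then -1 else (-1::int) ^ (card \<sigma> - 1))"

definition dimc :: "nat set set \<Rightarrow> nat" where
  "dimc D = Max (card ` D) - 1"

definition fvec :: "nat set set \<Rightarrow> nat \<Rightarrow> nat" where
  "fvec D d = card {\<sigma>\<in>D. card \<sigma> = d + 1}"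

definition fcoef :: "int \<Rightarrow> int \<Rightarrow> real" where
  "fcoef i d = (if i = -1 \<and> d = -1 then 1
     else if i = -1 \<or> d = -1 then 0
     else fact (nat (i + 1)) * real (Stirling (nat (d + 1)) (nat (i + 1))))"

function Fcoef :: "int \<Rightarrow> int \<Rightarrow> real" where
  "Fcoef i d = (if i = d then 1
     else if i < -1 \<or> d < i then 0
     else (1 / (fact (nat (d + 1)) - fact (nat (i + 1)))) *
            (\<Sum>j\<in>{i+1..d}. fcoef i j * Fcoef j d))"
  by auto
termination by (relation "measure (\<lambda>(i, d). nat (d - i))") auto

definition Fpoly :: "nat \<Rightarrow> real poly" where
  "Fpoly d = (\<Sum>i\<in>{-1..int d}. monom (Fcoef i (int d)) (nat (int d - i)))"

definition Hpoly :: "nat \<Rightarrow> real poly" where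
  "Hpoly d = pcompose (Fpoly d) [:-1, 1:]"

definition Hcoef :: "nat \<Rightarrow> nat \<Rightarrow> real" where
  "Hcoef i d = coeff (Hpoly d) (d + 1 - i)"

definition alpha :: "nat \<Rightarrow> real" where
  "alpha n = real_of_int (red_euler (Delta n)) /
     (Hcoef 1 (dimc (Delta n)) * real (fvec (Delta n) (dimc (Delta n))))"

end

theory Submission
  imports Defs "HOL-Real_Asymp.Real_Asymp"
begin


lemma Stirling_le: "Stirling a b \<le> (a choose b) * b ^ (a - b)"
proof (induction a arbitrary: b)
  case 0 then show ?case by (cases b) auto
next
  case (Suc a)
  show ?case
  proof (cases b)
    case 0 then show ?thesis by simp
  next
    case (Suc c)
    show ?thesis
    proof (cases "Suc c \<le> a")
      case True
      have h1: "Suc c * Stirling a (Suc c) \<le> Suc c * ((a choose Suc c) * Suc c ^ (a - Suc c))"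
        using Suc.IH[of "Suc c"] by (rule mult_le_mono2)
      have e1: "Suc c * ((a choose Suc c) * Suc c ^ (a - Suc c)) = (a choose Suc c) * Suc c ^ (a - c)"
      proof -
        have "a - c = Suc (a - Suc c)" using True by simp
        then show ?thesis by (simp only: power_Suc) (simp add: algebra_simps)
      qed
      have h2: "Stirling a c \<le> (a choose c) * c ^ (a - c)" using Suc.IH .
      have h3: "(a choose c) * c ^ (a - c) \<le> (a choose c) * Suc c ^ (a - c)"
        by (simp add: power_mono)
      have "Stirling (Suc a) b = Suc c * Stirling a (Suc c) + Stirling a c" using Suc by simp
      also have "\<dots> \<le> (a choose Suc c) * Suc c ^ (a - c) + (a choose c) * Suc c ^ (a - c)"
        using h1 e1 h2 h3 by linarith
      also have "\<dots> = (Suc a choose b) * b ^ (Suc a - b)" using Suc by (simp add: algebra_simps)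
      finally show ?thesis .
    next
      case False
      then have "a < Suc c" by simp
      then have z: "Stirling a (Suc c) = 0" by simp
      show ?thesis
      proof (cases "c = a")
        case True then show ?thesis using Suc by simp
      next
        case False
        then have "a < c" using \<open>a < Suc c\<close> by simp
        then show ?thesis using Suc z by simp
      qed
    qed
  qed
qed


lemma fact_pow_le: "fact (i+1) * (i+2)^r \<le> (fact (i+1+r) :: nat)"
proof (induction r)
  case 0 then show ?case by simp
next
  case (Suc r)
  have "fact (i+1) * (i+2)^Suc r = (i+2) * (fact (i+1) * (i+2)^r)" by (simp add: algebra_simps)
  also have "\<dots> \<le> (i+2+r) * fact (i+1+r)" using Suc.IH by (intro mult_le_mono) auto
  also have "\<dots> = fact (i+1+Suc r)" by (simp add: algebra_simps)
  finally show ?case .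
qed

lemma binsum: "(\<Sum>j\<in>{i+1..d}. ((d-i) choose (j-i)) * (i+1)^(j-i)) + 1 = (i+2::nat)^(d-i)"
  if "i \<le> d"
proof -
  define r where "r = d - i"
  have d: "d = r + i" using that r_def by simp
  have "(\<Sum>j\<in>{i+1..d}. ((d-i) choose (j-i)) * (i+1)^(j-i)) = (\<Sum>l\<in>{1..r}. (r choose l) * (i+1)^l)"
    unfolding d using sum.shift_bounds_cl_nat_ivl[of "\<lambda>j. ((r+i-i) choose (j-i)) * (i+1)^(j-i)" 1 i r]
    by (simp add: add.commute)
  moreover have "(\<Sum>l\<le>r. (r choose l) * (i+1)^l) = (\<Sum>l\<in>{1..r}. (r choose l) * (i+1)^l) + 1"
  proof -
    have "{..r} = insert 0 {1..r}" by auto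
    then show ?thesis by simp
  qed
  moreover have "(\<Sum>l\<le>r. (r choose l) * (i+1)^l) = (i+2)^r"
    using binomial_ring[of "i+1" 1 r] by (simp add: algebra_simps)
  ultimately show ?thesis using r_def by simp
qed

lemma keysum:
  assumes "i < d"
  shows "(\<Sum>j\<in>{i+1..d}. fact (i+1) * Stirling (j+1) (i+1) * ((d+1) choose (j+1)))
         \<le> (fact (d+1) - fact (i+1)) * ((d+1) choose (i+1))"
proof -
  have "(\<Sum>j\<in>{i+1..d}. fact (i+1) * Stirling (j+1) (i+1) * ((d+1) choose (j+1)))
     \<le> (\<Sum>j\<in>{i+1..d}. fact (i+1) * (((j+1) choose (i+1)) * (i+1)^(j-i)) * ((d+1) choose (j+1)))"
  proof (rule sum_mono)
    fix j assume "j \<in> {i+1..d}"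
    have "Stirling (j+1) (i+1) \<le> ((j+1) choose (i+1)) * (i+1)^(j-i)"
      using Stirling_le[of "j+1" "i+1"] by simp
    then show "fact (i+1) * Stirling (j+1) (i+1) * ((d+1) choose (j+1))
      \<le> fact (i+1) * (((j+1) choose (i+1)) * (i+1)^(j-i)) * ((d+1) choose (j+1))"
      by (intro mult_le_mono) auto
  qed
  also have "\<dots> = (\<Sum>j\<in>{i+1..d}. fact (i+1) * ((d+1) choose (i+1)) * (((d-i) choose (j-i)) * (i+1)^(j-i)))"
  proof (rule sum.cong)
    fix j assume j: "j \<in> {i+1..d}"
    have "((d+1) choose (j+1)) * ((j+1) choose (i+1)) = ((d+1) choose (i+1)) * ((d+1-(i+1)) choose (j+1-(i+1)))"
      using j by (intro choose_mult) auto
    then have "((d+1) choose (j+1)) * ((j+1) choose (i+1)) = ((d+1) choose (i+1)) * ((d-i) choose (j-i))"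
      by simp
    then show "fact (i+1) * (((j+1) choose (i+1)) * (i+1)^(j-i)) * ((d+1) choose (j+1))
      = fact (i+1) * ((d+1) choose (i+1)) * (((d-i) choose (j-i)) * (i+1)^(j-i))"
      by (metis (no_types, lifting) mult.assoc mult.commute)
  qed simp
  also have "\<dots> = fact (i+1) * ((d+1) choose (i+1)) * ((i+2)^(d-i) - 1)"
    using binsum[of i d] assms by (simp add: sum_distrib_left[symmetric])
  also have "\<dots> \<le> (fact (d+1) - fact (i+1)) * ((d+1) choose (i+1))"
  proof -
    have "fact (i+1) * (i+2)^(d-i) \<le> (fact (d+1)::nat)"
      using fact_pow_le[of i "d-i"] assms by simp
    then have "fact (i+1) * ((i+2)^(d-i) - 1) \<le> (fact (d+1) - fact (i+1)::nat)"
      by (simp add: diff_mult_distrib2)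
    then show ?thesis by (metis mult.commute mult.left_commute mult_le_mono2)
  qed
  finally show ?thesis .
qed


declare Fcoef.simps[simp del]
lemma fcoef_nat: "fcoef (int i) (int j) = fact (i+1) * real (Stirling (j+1) (i+1))"
  unfolding fcoef_def by (simp add: nat_add_distrib)

lemma Fcoef_nat_rec:
  assumes "i < d"
  shows "Fcoef (int i) (int d) = (1 / (fact (d+1) - fact (i+1))) *
     (\<Sum>j\<in>{i+1..d}. fact (i+1) * real (Stirling (j+1) (i+1)) * Fcoef (int j) (int d))"
proof -
  have "Fcoef (int i) (int d) = (1 / (fact (nat (int d + 1)) - fact (nat (int i + 1)))) *
            (\<Sum>j\<in>{int i+1..int d}. fcoef (int i) j * Fcoef j (int d))"
    using assms by (subst Fcoef.simps) simp
  also have "{int i+1..int d} = int ` {i+1..d}" by (simp add: image_int_atLeastAtMost)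
  also have "(\<Sum>j\<in>int ` {i+1..d}. fcoef (int i) j * Fcoef j (int d))
     = (\<Sum>j\<in>{i+1..d}. fact (i+1) * real (Stirling (j+1) (i+1)) * Fcoef (int j) (int d))"
    by (subst sum.reindex) (auto simp: fcoef_nat)
  finally show ?thesis by (simp add: nat_add_distrib)
qed

lemma Fcoef_same: "Fcoef i i = 1" by (subst Fcoef.simps) simp

lemma Fcoef_bound:
  "i \<le> d \<Longrightarrow> 0 \<le> Fcoef (int i) (int d) \<and> Fcoef (int i) (int d) \<le> real ((d+1) choose (i+1))"
proof (induction "d - i" arbitrary: i rule: less_induct)
  case less
  show ?case
  proof (cases "i = d")
    case True then show ?thesis by (simp add: Fcoef_same)
  next
    case False
    then have id: "i < d" using less.prems by simp
    have IH: "\<And>j. j \<in> {i+1..d} \<Longrightarrow> 0 \<le> Fcoef (int j) (int d) \<and> Fcoef (int j) (int d) \<le> real ((d+1) choose (j+1))"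
      using less.hyps by auto
    have Dpos: "fact (i+1) < (fact (d+1) :: real)"
      using id by (intro fact_less_mono) auto
    define S where "S = (\<Sum>j\<in>{i+1..d}. fact (i+1) * real (Stirling (j+1) (i+1)) * Fcoef (int j) (int d))"
    have S0: "0 \<le> S" unfolding S_def using IH by (intro sum_nonneg) auto
    have "S \<le> (\<Sum>j\<in>{i+1..d}. fact (i+1) * real (Stirling (j+1) (i+1)) * real ((d+1) choose (j+1)))"
      unfolding S_def using IH by (intro sum_mono mult_left_mono) auto
    also have "\<dots> = real (\<Sum>j\<in>{i+1..d}. fact (i+1) * Stirling (j+1) (i+1) * ((d+1) choose (j+1)))"
      by (simp only: of_nat_sum of_nat_mult of_nat_fact)
    also have "\<dots> \<le> real ((fact (d+1) - fact (i+1)) * ((d+1) choose (i+1)))"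
      using keysum[OF id] by linarith
    also have "\<dots> = (fact (d+1) - fact (i+1)) * real ((d+1) choose (i+1))"
    proof -
      have "fact (i+1) \<le> (fact (d+1) :: nat)" using id by (intro fact_mono_nat) auto
      then have "real (fact (d+1) - fact (i+1)) = fact (d+1) - fact (i+1)"
        by (simp only: of_nat_diff of_nat_fact)
      then show ?thesis by (simp only: of_nat_mult)
    qed
    finally have S1: "S \<le> (fact (d+1) - fact (i+1)) * real ((d+1) choose (i+1))" .
    have eq: "Fcoef (int i) (int d) = S / (fact (d+1) - fact (i+1))"
      unfolding S_def using Fcoef_nat_rec[OF id] by simp
    show ?thesis unfolding eq using S0 S1 Dpos
      by (auto simp: pos_divide_le_eq mult.commute)
  qed
qed

lemma Fcoef_m1: "Fcoef (-1) (int d) = 0"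
proof -
  have "\<And>j. j \<in> {0..int d} \<Longrightarrow> fcoef (-1) j = 0" unfolding fcoef_def by auto
  then show ?thesis by (subst Fcoef.simps) simp
qed


lemma pcompose_xpow: "([:0,1:] ^ n) \<circ>\<^sub>p r = (r ^ n :: real poly)"
  by (induction n) (auto simp: pcompose_mult pcompose_pCons one_pCons)

lemma coeff_lin_pow: "coeff ([:-1,1:] ^ k) d = (if k < d then 0 else if k = d then 1 else coeff ([:-1,1::real:] ^ k) d)"
proof -
  have "k < d \<Longrightarrow> coeff ([:-1,1::real:] ^ k) d = 0"
    by (rule coeff_eq_0) (simp add: degree_linear_power)
  moreover have "coeff ([:-1,1::real:] ^ d) d = 1"
    using lead_coeff_power[of "[:-1,1::real:]" d] by (simp add: degree_linear_power)
  ultimately show ?thesis by auto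
qed

lemma Hcoef1: "Hcoef 1 d = Fcoef 0 (int d)"
proof -
  have "Hcoef 1 d = coeff (Hpoly d) d" unfolding Hcoef_def by simp
  also have "Hpoly d = (\<Sum>i\<in>{-1..int d}. smult (Fcoef i (int d)) ([:-1,1:] ^ nat (int d - i)))"
    unfolding Hpoly_def Fpoly_def pcompose_sum
    by (simp add: monom_altdef pcompose_smult pcompose_xpow)
  also have "coeff \<dots> d = (\<Sum>i\<in>{-1..int d}. Fcoef i (int d) * coeff ([:-1,1:] ^ nat (int d - i)) d)"
    by (simp add: coeff_sum)
  also have "\<dots> = (\<Sum>i\<in>{-1..int d}. if i = 0 then Fcoef 0 (int d) else 0)"
  proof (rule sum.cong)
    fix i assume i: "i \<in> {-1..int d}"
    show "Fcoef i (int d) * coeff ([:-1,1:] ^ nat (int d - i)) d = (if i = 0 then Fcoef 0 (int d) else 0)"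
    proof (cases "i = -1")
      case True then show ?thesis by (simp add: Fcoef_m1)
    next
      case False
      then have "i \<ge> 0" using i by auto
      then show ?thesis using i by (subst coeff_lin_pow) auto
    qed
  qed simp
  also have "\<dots> = Fcoef 0 (int d)" by (simp add: sum.delta)
  finally show ?thesis .
qed

lemma Hcoef1_pos: "d \<ge> 1 \<Longrightarrow> 0 < Hcoef 1 d"
proof -
  assume d: "d \<ge> 1"
  have "Fcoef (int 0) (int d) = (1 / (fact (d+1) - fact (0+1))) *
     (\<Sum>j\<in>{0+1..d}. fact (0+1) * real (Stirling (j+1) (0+1)) * Fcoef (int j) (int d))"
    using d by (intro Fcoef_nat_rec) auto
  also have "\<dots> = (\<Sum>j\<in>{1..d}. Fcoef (int j) (int d)) / (fact (d+1) - 1)"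
  proof -
    have "\<And>j. Stirling (j+1) (0+1) = 1" by (metis Stirling_1 Suc_eq_plus1 One_nat_def)
    then show ?thesis by simp
  qed
  finally have e: "Fcoef 0 (int d) = (\<Sum>j\<in>{1..d}. Fcoef (int j) (int d)) / (fact (d+1) - 1)" by simp
  have "(\<Sum>j\<in>{1..d}. Fcoef (int j) (int d)) \<ge> Fcoef (int d) (int d)"
    using d Fcoef_bound by (intro member_le_sum) auto
  then have s: "(\<Sum>j\<in>{1..d}. Fcoef (int j) (int d)) \<ge> 1" by (simp add: Fcoef_same)
  have "(1::real) < fact (d+1)"
  proof -
    have "(fact 1 :: real) < fact (d+1)" using d by (intro fact_less_mono) auto
    then show ?thesis by simp
  qed
  then show ?thesis unfolding Hcoef1 e using s by simp
qed

lemma Hcoef1_le: "d \<ge> 1 \<Longrightarrow> Hcoef 1 d \<le> 2^(d+1) / (fact (d+1) - 1)"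
proof -
  assume d: "d \<ge> 1"
  have "Fcoef (int 0) (int d) = (1 / (fact (d+1) - fact (0+1))) *
     (\<Sum>j\<in>{0+1..d}. fact (0+1) * real (Stirling (j+1) (0+1)) * Fcoef (int j) (int d))"
    using d by (intro Fcoef_nat_rec) auto
  also have "\<dots> = (\<Sum>j\<in>{1..d}. Fcoef (int j) (int d)) / (fact (d+1) - 1)"
  proof -
    have "\<And>j. Stirling (j+1) (0+1) = 1" by (metis Stirling_1 Suc_eq_plus1 One_nat_def)
    then show ?thesis by simp
  qed
  finally have e: "Fcoef 0 (int d) = (\<Sum>j\<in>{1..d}. Fcoef (int j) (int d)) / (fact (d+1) - 1)" by simp
  have "(\<Sum>j\<in>{1..d}. Fcoef (int j) (int d)) \<le> (\<Sum>j\<in>{1..d}. real ((d+1) choose (j+1)))"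
    using Fcoef_bound by (intro sum_mono) auto
  also have "\<dots> \<le> (\<Sum>j\<le>d+1. real ((d+1) choose j))"
  proof -
    define g where "g = (\<lambda>j. real ((d+1) choose j))"
    have a: "sum g {1+1..d+1} = sum (\<lambda>i. g(i+1)) {1..d}" by (rule sum.shift_bounds_cl_nat_ivl)
    have "(\<Sum>j\<in>{1..d}. real ((d+1) choose (j+1))) = (\<Sum>j\<in>{2..d+1}. real ((d+1) choose j))"
      using a unfolding g_def by (simp only: one_add_one)
    also have "\<dots> \<le> (\<Sum>j\<le>d+1. real ((d+1) choose j))"
      by (intro sum_mono2) auto
    finally show ?thesis .
  qed
  also have "\<dots> = 2^(d+1)"
    using choose_row_sum[of "d+1"] by (simp only: of_nat_sum[symmetric]) simp
  finally have s: "(\<Sum>j\<in>{1..d}. Fcoef (int j) (int d)) \<le> 2^(d+1)" .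
  have "(1::real) < fact (d+1)"
  proof -
    have "(fact 1 :: real) < fact (d+1)" using d by (intro fact_less_mono) auto
    then show ?thesis by simp
  qed
  then show ?thesis unfolding Hcoef1 e using s by (simp add: divide_right_mono)
qed


definition pr :: "nat \<Rightarrow> nat" where "pr k = enumerate {p::nat. prime p} k"

lemma inf_primes: "infinite {p::nat. prime p}" using primes_infinite by simp

lemma pr_prime: "prime (pr k)"
  unfolding pr_def using enumerate_in_set[OF inf_primes] by simp

lemma pr_less_iff[simp]: "pr i < pr j \<longleftrightarrow> i < j"
  unfolding pr_def using inf_primes by simp

lemma pr_le_iff[simp]: "pr i \<le> pr j \<longleftrightarrow> i \<le> j"
  unfolding pr_def using inf_primes by simp

lemma pr_inj: "inj pr"
  by (metis injI le_antisym order_refl pr_le_iff)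

lemma pr_eq_iff[simp]: "pr i = pr j \<longleftrightarrow> i = j"
  using pr_inj by (auto dest: injD)

lemma pr_ex: "prime q \<Longrightarrow> \<exists>i. pr i = q"
  unfolding pr_def using enumerate_Ex[OF inf_primes] by auto

lemma pr_ge: "pr k \<ge> k + 2"
proof (induction k)
  case 0 then show ?case using pr_prime[of 0] prime_ge_2_nat[of "pr 0"] by simp
next
  case (Suc k)
  have "pr k < pr (Suc k)" by simp
  then show ?case using Suc by linarith
qed

lemma primes_below_pr: "{q. prime q \<and> q < pr k} = pr ` {..<k}"
proof
  show "{q. prime q \<and> q < pr k} \<subseteq> pr ` {..<k}"
  proof
    fix q assume "q \<in> {q. prime q \<and> q < pr k}"
    then obtain i where "pr i = q" "q < pr k" using pr_ex by auto
    then show "q \<in> pr ` {..<k}" by auto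
  qed
  show "pr ` {..<k} \<subseteq> {q. prime q \<and> q < pr k}" using pr_prime by auto
qed

lemma primes_le_pr: "{q. prime q \<and> q \<le> pr k} = pr ` {..k}"
proof
  show "{q. prime q \<and> q \<le> pr k} \<subseteq> pr ` {..k}"
  proof
    fix q assume "q \<in> {q. prime q \<and> q \<le> pr k}"
    then obtain i where "pr i = q" "q \<le> pr k" using pr_ex by auto
    then show "q \<in> pr ` {..k}" by auto
  qed
  show "pr ` {..k} \<subseteq> {q. prime q \<and> q \<le> pr k}" using pr_prime by auto
qed

lemma pr_le_of_card:
  assumes "finite A" "\<forall>a\<in>A. prime a" "card A \<ge> k+1" "\<forall>a\<in>A. a \<le> x"
  shows "pr k \<le> x"
proof (rule ccontr)
  assume "\<not> pr k \<le> x"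
  then have "A \<subseteq> {q. prime q \<and> q < pr k}" using assms(2,4) by force
  then have "A \<subseteq> pr ` {..<k}" unfolding primes_below_pr .
  then have "card A \<le> card (pr ` {..<k})" by (intro card_mono) auto
  also have "\<dots> \<le> k" using card_image_le[of "{..<k}" pr] by simp
  finally show False using assms(3) by simp
qed

lemma prod_ge:
  "finite A \<Longrightarrow> \<forall>a\<in>A. prime a \<Longrightarrow> card A = k \<Longrightarrow> (\<Prod>i<k. pr i) \<le> \<Prod>A"
proof (induction k arbitrary: A)
  case 0 then show ?case by simp
next
  case (Suc k)
  then have ne: "A \<noteq> {}" by auto
  define a where "a = Max A"
  have aA: "a \<in> A" using Max_in[OF Suc.prems(1) ne] a_def by simp
  have cA: "card (A - {a}) = k" using Suc.prems aA by simp
  have IH: "(\<Prod>i<k. pr i) \<le> \<Prod>(A - {a})" using Suc.IH[of "A - {a}"] Suc.prems cA by auto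
  have "pr k \<le> a" using Suc.prems Max_ge[OF Suc.prems(1)] a_def
    by (intro pr_le_of_card[of A]) auto
  have "(\<Prod>i<Suc k. pr i) = pr k * (\<Prod>i<k. pr i)" by simp
  also have "\<dots> \<le> a * \<Prod>(A - {a})" using IH \<open>pr k \<le> a\<close> by (intro mult_le_mono) auto
  also have "\<dots> = \<Prod>A" using aA Suc.prems(1) by (simp add: prod.remove)
  finally show ?case .
qed

lemma prod_primes_dvd:
  "finite A \<Longrightarrow> \<forall>p\<in>A. prime p \<and> p dvd (c::nat) \<Longrightarrow> \<Prod>A dvd c"
proof (induction A rule: finite_induct)
  case empty then show ?case by simp
next
  case (insert a A)
  have "\<not> a dvd \<Prod>A"
  proof
    assume "a dvd \<Prod>A"
    then obtain b where "b \<in> A" "a dvd b" using insert prime_dvd_prod_iff[of A a id] by auto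
    then have "a = b" using insert by (metis insert_iff primes_dvd_imp_eq)
    then show False using insert \<open>b \<in> A\<close> by simp
  qed
  then have "coprime a (\<Prod>A)" using insert by (intro prime_imp_coprime) auto
  then show ?case using insert by (simp add: divides_mult)
qed

definition prim :: "nat \<Rightarrow> nat" where "prim N = \<Prod>{p. prime p \<and> p \<le> N}"

lemma mid_bound:
  "\<Prod>{p. prime p \<and> n+1 < p \<and> p \<le> 2*n+1} \<le> 4^n"
proof -
  define C where "C = (2*n+1) choose n"
  have fe: "fact n * fact (n+1) * C = fact (2*n+1)"
    using binomial_fact_lemma[of n "2*n+1"] unfolding C_def by (simp add: algebra_simps)
  have "\<Prod>{p. prime p \<and> n+1 < p \<and> p \<le> 2*n+1} dvd C"
  proof (rule prod_primes_dvd)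
    show "finite {p. prime p \<and> n+1 < p \<and> p \<le> 2*n+1}" by simp
    show "\<forall>p\<in>{p. prime p \<and> n+1 < p \<and> p \<le> 2*n+1}. prime p \<and> p dvd C"
    proof
      fix p assume p: "p \<in> {p. prime p \<and> n+1 < p \<and> p \<le> 2*n+1}"
      then have pp: "prime p" by simp
      have "p dvd fact (2*n+1)" using p by (intro dvd_fact) auto
      then have "p dvd fact n * fact (n+1) * C" using fe by simp
      moreover have "\<not> p dvd fact n" using p prime_dvd_fact_iff[OF pp] by simp
      moreover have "\<not> p dvd fact (n+1)" using p prime_dvd_fact_iff[OF pp, of "n+1"] by auto
      ultimately show "prime p \<and> p dvd C" using pp prime_dvd_mult_iff[OF pp] by metis
    qed
  qed
  then have "\<Prod>{p. prime p \<and> n+1 < p \<and> p \<le> 2*n+1} \<le> C"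
    by (rule dvd_imp_le) (simp add: C_def)
  also have "C \<le> 4^n"
  proof -
    have s: "C + ((2*n+1) choose (n+1)) \<le> (\<Sum>k\<le>2*n+1. (2*n+1) choose k)"
    proof -
      have "(\<Sum>k\<in>{n,n+1}. (2*n+1) choose k) \<le> (\<Sum>k\<le>2*n+1. (2*n+1) choose k)"
        by (intro sum_mono2) auto
      then show ?thesis unfolding C_def by simp
    qed
    have "(2*n+1) choose (n+1) = C"
      unfolding C_def using binomial_symmetric[of "n+1" "2*n+1"] by simp
    then have "2 * C \<le> 2^(2*n+1)" using s choose_row_sum[of "2*n+1"] by simp
    then show ?thesis by (simp add: power_mult)
  qed
  finally show ?thesis .
qed

lemma prim_bound: "prim N \<le> 4^N"
proof (induction N rule: less_induct)
  case (less N)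
  show ?case
  proof (cases "N \<le> 2")
    case True
    have "{p. prime p \<and> p \<le> N} \<subseteq> {2}"
    proof
      fix p assume "p \<in> {p. prime p \<and> p \<le> N}"
      then have "prime p" "p \<le> N" by auto
      then show "p \<in> {2}" using prime_ge_2_nat[of p] True by simp
    qed
    then have "{p. prime p \<and> p \<le> N} = {} \<or> {p. prime p \<and> p \<le> N} = {2}" by (rule subset_singletonD)
    then have "prim N \<le> 2"
    proof
      assume h: "{p. prime p \<and> p \<le> N} = {}"
      show ?thesis unfolding prim_def by (simp add: h)
    next
      assume h: "{p. prime p \<and> p \<le> N} = {2}"
      show ?thesis unfolding prim_def by (simp only: h) simp
    qed
    moreover have "N \<ge> 1 \<Longrightarrow> (2::nat) \<le> 4^N"
    proof -
      assume "N \<ge> 1"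
      then have "(4::nat)^1 \<le> 4^N" by (intro power_increasing) auto
      then show ?thesis by simp
    qed
    moreover have "N = 0 \<Longrightarrow> prim N \<le> 1"
    proof -
      assume N0: "N = 0"
      have e: "{p::nat. prime p \<and> p \<le> N} = {}"
      proof (rule equals0I)
        fix p assume "p \<in> {p::nat. prime p \<and> p \<le> N}"
        then show False using prime_ge_2_nat[of p] N0 by auto
      qed
      show ?thesis unfolding prim_def by (simp only: e prod.empty order_refl)
    qed
    ultimately show ?thesis by (cases "N = 0") auto
  next
    case False
    show ?thesis
    proof (cases "even N")
      case True
      then have np: "\<not> prime N" using False prime_odd_nat[of N] by auto
      have pe: "p \<le> N \<longleftrightarrow> p \<le> N - 1" if "prime p" for p
      proof -
        have "p \<noteq> N" using np that by auto
        then show ?thesis by arith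
      qed
      have "{p. prime p \<and> p \<le> N} = {p. prime p \<and> p \<le> N - 1}" using pe by blast
      then have "prim N = prim (N-1)" unfolding prim_def by simp
      also have "\<dots> \<le> 4^(N-1)" using less.IH False by simp
      also have "\<dots> \<le> 4^N" by simp
      finally show ?thesis .
    next
      case odd: False
      then obtain n where N: "N = 2*n+1" by (metis oddE)
      have split: "{p. prime p \<and> p \<le> N} = {p. prime p \<and> p \<le> n+1} \<union> {p. prime p \<and> n+1 < p \<and> p \<le> 2*n+1}"
        using N by auto
      have "prim N = prim (n+1) * \<Prod>{p. prime p \<and> n+1 < p \<and> p \<le> 2*n+1}"
        unfolding prim_def split by (subst prod.union_disjoint) auto
      also have "\<dots> \<le> 4^(n+1) * 4^n" using less.IH[of "n+1"] N False mid_bound[of n]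
        by (intro mult_le_mono) auto
      also have "\<dots> = 4^N" using N by (simp add: power_add[symmetric])
      finally show ?thesis .
    qed
  qed
qed

lemma prod_pr_le: "(\<Prod>i\<le>k. pr i) \<le> 4 ^ pr k"
proof -
  have "(\<Prod>i\<le>k. pr i) = \<Prod>(pr ` {..k})" by (simp add: prod.reindex inj_on_def)
  also have "\<dots> = prim (pr k)" unfolding prim_def primes_le_pr ..
  also have "\<dots> \<le> 4 ^ pr k" by (rule prim_bound)
  finally show ?thesis .
qed


lemma suc_div: "(q::nat) > 0 \<Longrightarrow> Suc n div q = n div q + (if q dvd Suc n then 1 else 0)"
  by (auto simp: div_Suc dvd_eq_mod_eq_0)

lemma mult_le_n:
  assumes "prime (p::nat)" shows "multiplicity p (Suc n) \<le> n"
proof -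
  have "p ^ multiplicity p (Suc n) dvd Suc n" by (rule multiplicity_dvd)
  then have "p ^ multiplicity p (Suc n) \<le> Suc n" by (rule dvd_imp_le) simp
  moreover have "2 ^ multiplicity p (Suc n) \<le> p ^ multiplicity p (Suc n)"
    using prime_ge_2_nat[OF assms] by (intro power_mono) auto
  moreover have "multiplicity p (Suc n) < 2 ^ multiplicity p (Suc n)" by (rule less_exp)
  ultimately show ?thesis by linarith
qed

lemma card_pow_dvd:
  assumes "prime (p::nat)"
  shows "(\<Sum>k\<in>{1..n}. (if p^k dvd Suc n then 1 else 0::nat)) = multiplicity p (Suc n)"
proof -
  have p1: "p \<noteq> Suc 0" using prime_gt_1_nat[OF assms] by simp
  have pd: "\<And>k. p^k dvd Suc n \<longleftrightarrow> k \<le> multiplicity p (Suc n)"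
    using power_dvd_iff_le_multiplicity[of "Suc n" p] p1 by simp
  have "k \<in> {k\<in>{1..n}. p^k dvd Suc n} \<longleftrightarrow> k \<in> {1..multiplicity p (Suc n)}" for k
    unfolding mem_Collect_eq atLeastAtMost_iff pd using mult_le_n[OF assms, of n] by arith
  then have "{k\<in>{1..n}. p^k dvd Suc n} = {1..multiplicity p (Suc n)}" by blast
  then have "card {k\<in>{1..n}. p^k dvd Suc n} = multiplicity p (Suc n)" by simp
  then show ?thesis by (simp add: sum.If_cases Int_def)
qed

lemma legendre:
  assumes "prime (p::nat)"
  shows "multiplicity p (fact n) = (\<Sum>k\<in>{1..n}. n div p^k)"
proof (induction n)
  case 0 then show ?case by simp
next
  case (Suc n)
  have p1: "p > 1" using prime_gt_1_nat[OF assms] .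
  have "multiplicity p (fact (Suc n) :: nat) = multiplicity p (Suc n * fact n)" by simp
  also have "\<dots> = multiplicity p (Suc n) + multiplicity p (fact n :: nat)"
    using assms by (intro prime_elem_multiplicity_mult_distrib) auto
  finally have e1: "multiplicity p (fact (Suc n) :: nat) = multiplicity p (Suc n) + multiplicity p (fact n :: nat)" .
  have "Suc n < 2 ^ Suc n" by (rule less_exp)
  also have "\<dots> \<le> p ^ Suc n" using p1 by (intro power_mono) auto
  finally have z: "Suc n div p ^ Suc n = 0" by simp
  have "(\<Sum>k\<in>{1..Suc n}. Suc n div p^k) = (\<Sum>k\<in>{1..n}. Suc n div p^k) + Suc n div p ^ Suc n"
    by simp
  also have "\<dots> = (\<Sum>k\<in>{1..n}. n div p^k + (if p^k dvd Suc n then 1 else 0))"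
    using z p1 by (simp add: suc_div)
  also have "\<dots> = (\<Sum>k\<in>{1..n}. n div p^k) + (\<Sum>k\<in>{1..n}. (if p^k dvd Suc n then 1 else 0::nat))"
    by (simp only: sum.distrib)
  also have "\<dots> = (\<Sum>k\<in>{1..n}. n div p^k) + multiplicity p (Suc n)"
    by (simp only: card_pow_dvd[OF assms])
  finally show ?case using e1 Suc.IH by simp
qed

lemma term_le: "(2*n) div (q::nat) \<le> 2 * (n div q) + 1"
proof (cases "q = 0")
  case True then show ?thesis by simp
next
  case False
  have e: "q*(n div q) + n mod q = n" by simp
  have "2*n = q * (2 * (n div q)) + 2 * (n mod q)" using e by (metis distrib_left mult.left_commute)
  moreover have "2 * (n mod q) < 2 * q" using False by simp
  ultimately have "2*n < q * (2 * (n div q) + 2)" by (simp add: algebra_simps)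
  then have "(2*n) div q < 2 * (n div q) + 2" using False
    by (simp add: div_less_iff_less_mult mult.commute)
  then show ?thesis by simp
qed

lemma term_ge: "2 * (n div (q::nat)) \<le> (2*n) div q"
proof (cases "q = 0")
  case True then show ?thesis by simp
next
  case False
  have "q * (n div q) \<le> n" by (rule times_div_less_eq_dividend)
  then have "2 * (n div q) * q \<le> 2*n" by (simp add: algebra_simps)
  then show ?thesis using False by (simp add: less_eq_div_iff_mult_less_eq)
qed

lemma binom_mult_bound:
  assumes "prime (p::nat)" "n > 0"
  shows "p ^ multiplicity p ((2*n) choose n) \<le> 2*n"
proof -
  define C where "C = (2*n) choose n"
  define v where "v = multiplicity p C"
  have p1: "p > 1" using prime_gt_1_nat[OF assms(1)] .
  have fe: "fact (2*n) = C * (fact n * fact n)"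
    using binomial_fact_lemma[of n "2*n"] unfolding C_def by (simp add: algebra_simps)
  have C0: "C \<noteq> 0" unfolding C_def by simp
  have "multiplicity p (fact (2*n) :: nat) = v + (multiplicity p (fact n::nat) + multiplicity p (fact n::nat))"
    unfolding fe v_def using assms C0
    by (simp add: prime_elem_multiplicity_mult_distrib)
  then have ve: "v + 2 * (\<Sum>k\<in>{1..n}. n div p^k) = (\<Sum>k\<in>{1..2*n}. (2*n) div p^k)"
    using legendre[OF assms(1), of n] legendre[OF assms(1), of "2*n"] by simp
  have ext: "(\<Sum>k\<in>{1..n}. n div p^k) = (\<Sum>k\<in>{1..2*n}. n div p^k)"
  proof -
    have "\<forall>k\<in>{1..2*n} - {1..n}. n div p^k = 0"
    proof
      fix k assume k: "k \<in> {1..2*n} - {1..n}"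
      have "n < 2^n" by (rule less_exp)
      also have "(2::nat)^n \<le> 2^k" using k by (intro power_increasing) auto
      finally have "n < 2^k" .
      also have "\<dots> \<le> p^k" using p1 by (intro power_mono) auto
      finally show "n div p^k = 0" by simp
    qed
    then show ?thesis by (intro sum.mono_neutral_left) auto
  qed
  have vsum: "v = (\<Sum>k\<in>{1..2*n}. (2*n) div p^k - 2 * (n div p^k))"
  proof -
    have A: "(\<Sum>k\<in>{1..2*n}. (2*n) div p^k - 2 * (n div p^k)) + (\<Sum>k\<in>{1..2*n}. 2 * (n div p^k))
       = (\<Sum>k\<in>{1..2*n}. (2*n) div p^k)"
      by (subst sum.distrib[symmetric]) (intro sum.cong, auto simp: term_ge)
    have B: "(\<Sum>k\<in>{1..2*n}. 2 * (n div p^k)) = 2 * (\<Sum>k\<in>{1..2*n}. n div p^k)"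
      by (rule sum_distrib_left[symmetric])
    show ?thesis using A B ve[unfolded ext] by linarith
  qed
  have vlt: "v < K" if K: "2*n < p^K" for K
  proof -
    have "v \<le> (\<Sum>k\<in>{1..2*n}. (if p^k \<le> 2*n then 1 else 0::nat))"
      unfolding vsum
    proof (intro sum_mono)
      fix k assume "k \<in> {1..2*n}"
      show "(2*n) div p^k - 2 * (n div p^k) \<le> (if p^k \<le> 2*n then 1 else 0)"
      proof (cases "p^k \<le> 2*n")
        case True then show ?thesis using term_le[of n "p^k"] by simp
      next
        case False then show ?thesis by simp
      qed
    qed
    also have "\<dots> = card {k\<in>{1..2*n}. p^k \<le> 2*n}" by (simp add: sum.If_cases Int_def)
    also have "\<dots> \<le> card {1..<K}"
    proof (intro card_mono)
      show "{k\<in>{1..2*n}. p^k \<le> 2*n} \<subseteq> {1..<K}"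
      proof
        fix k assume "k \<in> {k\<in>{1..2*n}. p^k \<le> 2*n}"
        then have "k \<ge> 1" "p^k < p^K" using K by auto
        then show "k \<in> {1..<K}" using p1 by (simp add: power_strict_increasing_iff)
      qed
    qed simp
    also have "\<dots> < K" using K assms(2) by (cases K) auto
    finally show ?thesis .
  qed
  show ?thesis
  proof (rule ccontr)
    assume "\<not> p ^ multiplicity p ((2*n) choose n) \<le> 2*n"
    then have "2*n < p^v" unfolding v_def C_def by simp
    then show False using vlt by blast
  qed
qed

definition primepi :: "nat \<Rightarrow> nat" where "primepi x = card {p. prime p \<and> p \<le> x}"

lemma pr_le_if_primepi: "primepi x \<ge> k+1 \<Longrightarrow> pr k \<le> x"
  unfolding primepi_def by (rule pr_le_of_card) auto

lemma binom_le_primepi: "n > 0 \<Longrightarrow> (2*n) choose n \<le> (2*n) ^ primepi (2*n)"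
proof -
  assume n: "n > 0"
  define C where "C = (2*n) choose n"
  have C0: "C \<noteq> 0" unfolding C_def by simp
  have sub: "prime_factors C \<subseteq> {p. prime p \<and> p \<le> 2*n}"
  proof
    fix p assume "p \<in> prime_factors C"
    then have "prime p" "p dvd C" by auto
    have eq: "fact n * fact n * C = (fact (2*n) :: nat)"
      using binomial_fact_lemma[of n "2*n"] unfolding C_def by simp
    have "C dvd fact (2*n)" by (metis eq dvd_triv_right)
    then have "p dvd fact (2*n)" using \<open>p dvd C\<close> by (rule dvd_trans[rotated])
    then show "p \<in> {p. prime p \<and> p \<le> 2*n}" using \<open>prime p\<close> prime_dvd_fact_iff by auto
  qed
  have "C = (\<Prod>p\<in>prime_factors C. p ^ multiplicity p C)" using prod_prime_factors[OF C0] by simp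
  also have "\<dots> \<le> (\<Prod>p\<in>prime_factors C. 2*n)"
    using binom_mult_bound[OF _ n] unfolding C_def by (intro prod_mono) auto
  also have "\<dots> = (2*n) ^ card (prime_factors C)" by simp
  also have "\<dots> \<le> (2*n) ^ primepi (2*n)" unfolding primepi_def using n sub
    by (intro power_increasing card_mono) auto
  finally show ?thesis unfolding C_def .
qed


lemma pow_fact_le_exp: "(real n) ^ n / fact n \<le> exp (real n)"
proof -
  define f where "f = (\<lambda>k. real n ^ k /\<^sub>R fact k)"
  have s: "f sums exp (real n)" unfolding f_def by (rule exp_converges)
  have "sum f {n} \<le> suminf f"
    using s by (intro sum_le_suminf) (auto simp: sums_summable f_def)
  then show ?thesis using sums_unique[OF s] by (simp add: f_def divide_inverse mult.commute)
qed

lemma ln_fact_ge: "real n * ln (real n) - real n \<le> ln (fact n)"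
proof (cases "n = 0")
  case True then show ?thesis by simp
next
  case False
  have "ln ((real n) ^ n / fact n) \<le> ln (exp (real n))"
    using pow_fact_le_exp[of n] False by (intro ln_mono) auto
  then have "ln ((real n) ^ n / fact n) \<le> real n" by simp
  then show ?thesis using False by (simp add: ln_div ln_realpow)
qed

lemma ln4_ge1: "1 \<le> ln (4::real)"
proof -
  have "exp 1 \<le> (4::real)" using exp_le by simp
  then show ?thesis by (subst ln_ge_iff) auto
qed

lemma pr_lower: "real (pr k) * ln 4 \<ge> real (k+1) * ln (real (k+1)) - real (k+1)"
proof -
  have "fact (k+1) = (\<Prod>i\<le>k. (i+1::nat))"
    by (induction k) (simp_all add: algebra_simps)
  also have "\<dots> \<le> (\<Prod>i\<le>k. pr i)"
  proof (intro prod_mono)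
    fix i show "0 \<le> i+1 \<and> i+1 \<le> pr i" using pr_ge[of i] by simp
  qed
  also have "\<dots> \<le> 4 ^ pr k" by (rule prod_pr_le)
  finally have "fact (k+1) \<le> (4::nat) ^ pr k" .
  then have "(fact (k+1) :: real) \<le> 4 ^ pr k" by (metis of_nat_fact of_nat_le_iff of_nat_numeral of_nat_power)
  then have "ln (fact (k+1)) \<le> ln ((4::real) ^ pr k)" by (intro ln_mono) auto
  then have "ln (fact (k+1)) \<le> real (pr k) * ln 4" by (simp add: ln_realpow)
  then show ?thesis using ln_fact_ge[of "k+1"] by linarith
qed

lemma primepi_lower:
  assumes "n > 0"
  shows "real n * ln 4 - ln (2 * real n) \<le> real (primepi (2*n)) * ln (2 * real n)"
proof -
  have "4^n / (2*real n) \<le> real ((2*n) choose n)" using central_binomial_lower_bound[OF assms] .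
  also have "\<dots> \<le> real ((2*n) ^ primepi (2*n))" using binom_le_primepi[OF assms] by linarith
  finally have h: "4^n / (2*real n) \<le> (2*real n) ^ primepi (2*n)" by simp
  have "ln (4^n / (2*real n)) \<le> ln ((2*real n) ^ primepi (2*n))"
    using h assms by (intro ln_mono) auto
  moreover have "ln ((2*real n) ^ primepi (2*n)) = real (primepi (2*n)) * ln (2*real n)"
    using assms by (intro ln_realpow) 
  moreover have "ln (4^n / (2*real n)) = real n * ln 4 - ln (2*real n)"
    using assms by (simp add: ln_div ln_realpow)
  ultimately show ?thesis by linarith
qed

lemma pr_upper: "real (pr k) \<le> 16 * real (k+1) * (ln (real (k+1)) + 2)"
proof -
  define x where "x = real (k+1)"
  have x1: "x \<ge> 1" unfolding x_def by simp
  define a where "a = nat \<lceil>ln x\<rceil> + 1"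
  have a1: "real a \<ge> 1" unfolding a_def by simp
  have ax: "real a \<ge> ln x + 1" unfolding a_def using x1 by linarith
  have lx0: "ln x \<ge> 0" using x1 by simp
  have ax2: "real a \<le> ln x + 2"
  proof -
    have "real (nat \<lceil>ln x\<rceil>) = real_of_int \<lceil>ln x\<rceil>" using lx0 by simp
    moreover have "real_of_int \<lceil>ln x\<rceil> < ln x + 1" using ceiling_correct[of "ln x"] by linarith
    ultimately show ?thesis unfolding a_def by simp
  qed
  define n where "n = 8 * (k+1) * a"
  have n0: "n > 0" unfolding n_def a_def by simp
  have rn: "real n = 8 * x * real a" unfolding n_def x_def by simp
  have "primepi (2*n) \<ge> k+1"
  proof (rule ccontr)
    assume "\<not> primepi (2*n) \<ge> k+1"
    then have pk: "real (primepi (2*n)) \<le> real k" by simp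
    have l2n: "ln (2 * real n) \<ge> 0" using n0 by simp
    have "real n * ln 4 - ln (2 * real n) \<le> real k * ln (2 * real n)"
      using primepi_lower[OF n0] pk l2n by (meson mult_right_mono order_trans)
    then have A: "real n * ln 4 \<le> x * ln (2 * real n)" unfolding x_def by (simp add: algebra_simps)
    have "ln (2 * real n) = ln 16 + ln x + ln (real a)"
      using x1 a1 by (simp add: rn ln_mult)
    also have "ln (16::real) = 4 * ln 2"
      using ln_realpow[of 2 4] by simp
    also have "\<dots> < 4" using ln_2_less_1 by simp
    finally have "ln (2 * real n) < 4 + (real a - 1) + (real a - 1)"
      using ax ln_le_minus_one[of "real a"] a1 by linarith
    then have "x * ln (2 * real n) < x * (4 * real a)" using x1 a1
      by (intro mult_strict_left_mono) auto
    moreover have "x * (4 * real a) < real n * ln 4"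
      unfolding rn using ln4_ge1 x1 a1 by (simp add: mult_less_le_imp_less mult_le_cancel_left1)
    ultimately show False using A by linarith
  qed
  then have "pr k \<le> 2*n" by (rule pr_le_if_primepi)
  then have "real (pr k) \<le> real (2*n)" by (simp only: of_nat_le_iff)
  also have "real (2*n) = 16 * x * real a" using rn by simp
  finally have "real (pr k) \<le> 16 * x * real a" .
  also have "\<dots> \<le> 16 * x * (ln x + 2)" using ax2 x1 by (intro mult_left_mono) auto
  finally show ?thesis unfolding x_def .
qed


lemma sqf_prod: "squarefree (k::nat) \<Longrightarrow> \<Prod>(prime_factors k) = k"
proof -
  assume s: "squarefree k"
  then have k0: "k \<noteq> 0" by (metis not_squarefree_0)
  have "\<Prod>(prime_factors k) = (\<Prod>p\<in>prime_factors k. p ^ multiplicity p k)"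
    using s k0 squarefree_factorial_semiring'[OF k0] by (intro prod.cong) auto
  also have "\<dots> = k" using prod_prime_factors[OF k0] by simp
  finally show ?thesis .
qed

lemma pf_prod: "finite \<sigma> \<Longrightarrow> \<forall>p\<in>\<sigma>. prime (p::nat) \<Longrightarrow> prime_factors (\<Prod>\<sigma>) = \<sigma>"
proof -
  assume f: "finite \<sigma>" and p: "\<forall>p\<in>\<sigma>. prime (p::nat)"
  have "prime_factors (prod id \<sigma>) = \<Union>((prime_factors \<circ> id) ` \<sigma>)"
    using f p by (intro prime_factors_prod) auto
  also have "\<dots> = \<sigma>" using p by (auto simp: prime_prime_factors)
  finally show ?thesis by simp
qed

lemma sqf_of_primes: "finite \<sigma> \<Longrightarrow> \<forall>p\<in>\<sigma>. prime (p::nat) \<Longrightarrow> squarefree (\<Prod>\<sigma>)"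
proof -
  assume f: "finite \<sigma>" and p: "\<forall>p\<in>\<sigma>. prime (p::nat)"
  have "squarefree (prod id \<sigma>)"
    using p by (intro squarefree_prod_coprime) (auto simp: primes_coprime squarefree_prime)
  then show ?thesis by simp
qed

lemma D_char:
  assumes "n \<ge> 1"
  shows "\<sigma> \<in> Delta n \<longleftrightarrow> finite \<sigma> \<and> (\<forall>p\<in>\<sigma>. prime p) \<and> \<Prod>\<sigma> \<le> n"
proof
  assume "\<sigma> \<in> Delta n"
  then obtain k where k: "\<sigma> = prime_factors k" "1 \<le> k" "k \<le> n" "squarefree k"
    unfolding Delta_def by auto
  then show "finite \<sigma> \<and> (\<forall>p\<in>\<sigma>. prime p) \<and> \<Prod>\<sigma> \<le> n"
    using sqf_prod[OF k(4)] by auto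
next
  assume h: "finite \<sigma> \<and> (\<forall>p\<in>\<sigma>. prime p) \<and> \<Prod>\<sigma> \<le> n"
  have "\<Prod>\<sigma> \<ge> 1" using h by (metis One_nat_def Suc_leI not_prime_0 prod_pos zero_less_iff_neq_zero)
  then show "\<sigma> \<in> Delta n" unfolding Delta_def using h pf_prod sqf_of_primes
    by (intro CollectI exI[of _ "\<Prod>\<sigma>"]) auto
qed

lemma Delta_sub: "Delta n \<subseteq> Pow {..n}"
proof
  fix \<sigma> assume s: "\<sigma> \<in> Delta n"
  then obtain k where k: "\<sigma> = prime_factors k" "1 \<le> k" "k \<le> n" "squarefree k"
    unfolding Delta_def by auto
  have "\<forall>p\<in>\<sigma>. p \<le> n"
  proof
    fix p assume "p \<in> \<sigma>"
    then have "p dvd k" using k by auto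
    then show "p \<le> n" using k by (meson dvd_imp_le order_trans zero_less_one less_le_trans)
  qed
  then show "\<sigma> \<in> Pow {..n}" by auto
qed

lemma fin_Delta: "finite (Delta n)"
  using Delta_sub by (rule finite_subset) simp

definition mm :: "nat \<Rightarrow> nat" where "mm n = Max (card ` Delta n)"
definition TT :: "nat \<Rightarrow> nat set set" where "TT n = {\<sigma>\<in>Delta n. card \<sigma> = mm n}"

lemma empty_in: "n \<ge> 1 \<Longrightarrow> {} \<in> Delta n"
  using D_char by simp

lemma prodQ: "\<Prod>(pr ` {..<k}) = (\<Prod>i<k. pr i)"
  by (simp add: prod.reindex inj_on_def)

lemma cardQ: "card (pr ` {..<k}) = k"
  by (simp add: card_image inj_on_def)

lemma Q_in: "n \<ge> 1 \<Longrightarrow> (\<Prod>i<k. pr i) \<le> n \<Longrightarrow> pr ` {..<k} \<in> Delta n"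
  using D_char prodQ pr_prime by auto

lemma card_le_mm: "\<sigma> \<in> Delta n \<Longrightarrow> card \<sigma> \<le> mm n"
  unfolding mm_def using fin_Delta by (intro Max_ge) auto

lemma mm_ge: "n \<ge> 1 \<Longrightarrow> (\<Prod>i<k. pr i) \<le> n \<Longrightarrow> k \<le> mm n"
  using card_le_mm[OF Q_in] cardQ by metis

lemma n_less: "n \<ge> 1 \<Longrightarrow> n < (\<Prod>i<mm n + 1. pr i)"
  using mm_ge[of n "mm n + 1"] by force

lemma TT_ne: "n \<ge> 1 \<Longrightarrow> TT n \<noteq> {}"
proof -
  assume n: "n \<ge> 1"
  have "mm n \<in> card ` Delta n" unfolding mm_def using fin_Delta empty_in[OF n]
    by (intro Max_in) auto
  then show ?thesis unfolding TT_def by auto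
qed

lemma lowerP: "n \<ge> 1 \<Longrightarrow> (\<Prod>i<mm n. pr i) \<le> n"
proof -
  assume n: "n \<ge> 1"
  obtain \<sigma> where s: "\<sigma> \<in> TT n" using TT_ne[OF n] by auto
  then have "\<sigma> \<in> Delta n" "card \<sigma> = mm n" unfolding TT_def by auto
  then have "finite \<sigma>" "\<forall>p\<in>\<sigma>. prime p" "\<Prod>\<sigma> \<le> n" using D_char[OF n] by auto
  then show ?thesis using prod_ge[of \<sigma> "mm n"] \<open>card \<sigma> = mm n\<close> by simp
qed

lemma dimc_eq: "dimc (Delta n) = mm n - 1"
  unfolding dimc_def mm_def ..

lemma mm_ge1: "n \<ge> 2 \<Longrightarrow> mm n \<ge> 1"
proof -
  assume "n \<ge> 2"
  moreover have "(\<Prod>i<1. pr i) = 2"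
  proof -
    have "pr 0 = 2"
    proof -
      have "pr 0 \<le> 2" using pr_le_of_card[of "{2}" 0 2] by simp
      then show ?thesis using pr_prime[of 0] prime_ge_2_nat[of "pr 0"] by simp
    qed
    then show ?thesis by simp
  qed
  ultimately show ?thesis using mm_ge[of n 1] by simp
qed

lemma fvec_eq: "mm n \<ge> 1 \<Longrightarrow> fvec (Delta n) (dimc (Delta n)) = card (TT n)"
  unfolding fvec_def dimc_eq TT_def by simp

lemma mm_eventually: "eventually (\<lambda>n. mm n \<ge> K) sequentially"
proof -
  have "\<forall>n\<ge>max 1 (\<Prod>i<K. pr i). K \<le> mm n" using mm_ge by auto
  then show ?thesis unfolding eventually_sequentially by blast
qed


lemma card_subsle:
  assumes "finite B" "card B \<ge> 1"
  shows "card {A. A \<subseteq> B \<and> card A \<le> J} \<le> (J+1) * card B ^ J"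
proof -
  have e: "{A. A \<subseteq> B \<and> card A \<le> J} = (\<Union>j\<in>{..J}. {A. A \<subseteq> B \<and> card A = j})" by auto
  have "card {A. A \<subseteq> B \<and> card A \<le> J} \<le> (\<Sum>j\<in>{..J}. card {A. A \<subseteq> B \<and> card A = j})"
    unfolding e by (rule card_UN_le) simp
  also have "\<dots> = (\<Sum>j\<in>{..J}. card B choose j)" using assms(1) by (simp add: n_subsets)
  also have "\<dots> \<le> (\<Sum>j\<in>{..J}. card B ^ J)"
  proof (rule sum_mono)
    fix j assume j: "j \<in> {..J}"
    have "card B choose j \<le> card B ^ j"
    proof (cases "j \<le> card B")
      case True then show ?thesis by (rule binomial_le_pow)
    next
      case False then show ?thesis by (simp add: binomial_eq_0)
    qed
    also have "\<dots> \<le> card B ^ J" using j assms(2) by (intro power_increasing) auto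
    finally show "card B choose j \<le> card B ^ J" .
  qed
  also have "\<dots> = (J+1) * card B ^ J" by simp
  finally show ?thesis .
qed

lemma lowerE:
  fixes E :: "nat set"
  assumes fE: "finite E" and gt: "\<forall>e\<in>E. e > P" and P1: "P \<ge> 1" and t: "t \<le> card E"
  shows "real P ^ card E * (1 + real t / real P) ^ (card E - t) \<le> real (\<Prod>E)"
proof -
  define E' where "E' = {e\<in>E. e > P + t}"
  have fE': "finite E'" unfolding E'_def using fE by simp
  have sub: "E - E' \<subseteq> {P+1..P+t}" unfolding E'_def using gt by auto
  have c1: "card (E - E') \<le> t" using card_mono[OF _ sub] by simp
  have E'E: "E' \<subseteq> E" unfolding E'_def by auto
  have cE: "card E = card E' + card (E - E')"
    using card_Diff_subset[OF fE' E'E] card_mono[OF fE E'E] by simp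
  have c2: "card E' \<ge> card E - t" using cE c1 by simp
  have "real (\<Prod>E) = real (\<Prod>E') * real (\<Prod>(E - E'))"
    using fE E'E by (simp add: prod.subset_diff[of E' E] algebra_simps)
  also have "real (\<Prod>E') \<ge> real (P + t) ^ card E'"
  proof -
    have "(\<Prod>e\<in>E'. P + t) \<le> \<Prod>E'" unfolding E'_def by (intro prod_mono) auto
    then show ?thesis by (metis of_nat_le_iff of_nat_power prod_constant)
  qed
  moreover have "real (\<Prod>(E - E')) \<ge> real P ^ card (E - E')"
  proof -
    have "(\<Prod>e\<in>E - E'. P) \<le> \<Prod>(E - E')" using gt by (intro prod_mono) auto
    then show ?thesis by (metis of_nat_le_iff of_nat_power prod_constant)
  qed
  ultimately have A: "real (\<Prod>E) \<ge> real (P + t) ^ card E' * real P ^ card (E - E')"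
    by (metis (no_types, lifting) mult_mono of_nat_0_le_iff zero_le_power)
  have hq: "real (P + t) = real P * (1 + real t / real P)" using P1 by (simp add: field_simps)
  have "real (P + t) ^ card E' * real P ^ card (E - E') = (real P ^ card E' * real P ^ card (E - E')) * (1 + real t / real P) ^ card E'"
    unfolding hq power_mult_distrib by (simp add: mult_ac)
  also have "real P ^ card E' * real P ^ card (E - E') = real P ^ card E" using cE by (simp add: power_add)
  finally have "real (P + t) ^ card E' * real P ^ card (E - E') = real P ^ card E * (1 + real t / real P) ^ card E'" .
  moreover have "(1 + real t / real P) ^ (card E - t) \<le> (1 + real t / real P) ^ card E'"
    using c2 by (intro power_increasing) auto
  then have "real P ^ card E * (1 + real t / real P) ^ (card E - t) \<le> real P ^ card E * (1 + real t / real P) ^ card E'"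
    by (rule mult_left_mono) simp
  ultimately show ?thesis using A by linarith
qed

lemma t_bound:
  fixes t :: nat and P L :: real
  assumes P: "P \<ge> 1" and h: "(1 + real t / P) ^ t \<le> exp L"
  shows "real t \<le> sqrt (2 * P * L) + 2 * L"
proof (cases "t = 0")
  case True
  have "L \<ge> 0"
  proof -
    have "1 \<le> exp L" using h True by simp
    then show ?thesis by simp
  qed
  then show ?thesis using True P by simp
next
  case False
  define x where "x = real t / P"
  have x0: "x > 0" unfolding x_def using False P by simp
  have "ln ((1 + x) ^ t) \<le> ln (exp L)" using h x0 unfolding x_def by (intro ln_mono) auto
  then have "ln ((1 + x) ^ t) \<le> L" by simp
  then have A: "real t * ln (1 + x) \<le> L" using x0 by (simp add: ln_realpow)
  have B: "x / (1 + x) \<le> ln (1 + x)" using ln_add1_ge[of x] x0 by (simp add: add.commute)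
  have C: "real t * (x / (1 + x)) \<le> L" using A B by (meson mult_left_mono of_nat_0_le_iff order_trans)
  show ?thesis
  proof (cases "x \<le> 1")
    case True
    have "x / 2 \<le> x / (1 + x)" using True x0 by (intro divide_left_mono) auto
    then have "real t * (x / 2) \<le> L" using C by (meson mult_left_mono of_nat_0_le_iff order_trans)
    then have "real t * real t \<le> 2 * P * L" unfolding x_def using P by (simp add: field_simps)
    then have "real t \<le> sqrt (2 * P * L)" using real_le_rsqrt by (metis power2_eq_square)
    moreover have "L \<ge> 0" using C x0 by (smt (verit) divide_nonneg_pos mult_nonneg_nonneg of_nat_0_le_iff)
    ultimately show ?thesis by simp
  next
    case False
    have "1 / 2 \<le> x / (1 + x)" using False by (simp add: field_simps)
    then have "real t * (1/2) \<le> L" using C by (meson mult_left_mono of_nat_0_le_iff order_trans)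
    moreover have "0 \<le> L" using calculation by simp
    then have "0 \<le> sqrt (2 * P * L)" using P by simp
    ultimately show ?thesis by linarith
  qed
qed


lemma prod_split2: "m \<ge> 1 \<Longrightarrow> (\<Prod>i<m+1. pr i) = pr m * pr (m-1) * (\<Prod>i<m-1. pr i)"
proof -
  assume "m \<ge> 1"
  then obtain k where k: "m = Suc k" by (cases m) auto
  show ?thesis unfolding k by simp
qed

lemma elem_bound:
  assumes n: "n \<ge> 1" and m1: "mm n \<ge> 1" and s: "\<sigma> \<in> TT n" and e: "e \<in> \<sigma>"
  shows "e < pr (mm n - 1) * pr (mm n)"
proof -
  let ?m = "mm n"
  have sD: "\<sigma> \<in> Delta n" "card \<sigma> = ?m" using s unfolding TT_def by auto
  then have f: "finite \<sigma>" "\<forall>p\<in>\<sigma>. prime p" "\<Prod>\<sigma> \<le> n" using D_char[OF n] by auto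
  define X where "X = \<Prod>(\<sigma> - {e})"
  define Y where "Y = (\<Prod>i<?m-1. pr i)"
  have "card (\<sigma> - {e}) = ?m - 1" using sD f e by simp
  then have YX: "Y \<le> X" unfolding X_def Y_def using f by (intro prod_ge) auto
  have Y0: "Y > 0" unfolding Y_def using pr_prime by (simp add: prime_gt_0_nat prod_pos)
  have "e * X = \<Prod>\<sigma>" unfolding X_def using f e by (simp add: prod.remove)
  then have "e * Y \<le> n" using YX f by (metis dual_order.trans mult_le_mono2)
  also have "n < (\<Prod>i<?m+1. pr i)" by (rule n_less[OF n])
  also have "\<dots> = pr ?m * pr (?m-1) * Y" unfolding Y_def by (rule prod_split2[OF m1])
  finally have "e * Y < (pr (?m-1) * pr ?m) * Y" by (simp add: mult_ac)
  then show ?thesis using Y0 by simp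
qed


lemma j_bound:
  assumes n: "n \<ge> 1" and m2: "mm n \<ge> 2" and s: "\<sigma> \<in> TT n"
  defines "Q \<equiv> pr ` {..<mm n}" and "P \<equiv> pr (mm n - 1)"
  shows "real (card (\<sigma> - Q)) \<le> 2 * (sqrt (2 * real P * ln (real (pr (mm n)))) + 2 * ln (real (pr (mm n)))) + 1"
    and "card (\<sigma> - Q) = card (Q - \<sigma>)"
proof -
  let ?m = "mm n"
  have sD: "\<sigma> \<in> Delta n" "card \<sigma> = ?m" using s unfolding TT_def by auto
  then have f: "finite \<sigma>" "\<forall>p\<in>\<sigma>. prime p" "\<Prod>\<sigma> \<le> n" using D_char[OF n] by auto
  have fQ: "finite Q" and cQ: "card Q = ?m" unfolding Q_def using cardQ by auto
  have P1: "P \<ge> 1" unfolding P_def using pr_ge[of "?m - 1"] by simp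
  define j where "j = card (\<sigma> - Q)"
  have cj: "card (Q - \<sigma>) = j"
  proof -
    have "card (\<sigma> - Q) = card \<sigma> - card (\<sigma> \<inter> Q)" using f by (intro card_Diff_subset_Int) auto
    moreover have "card (Q - \<sigma>) = card Q - card (Q \<inter> \<sigma>)" using fQ by (intro card_Diff_subset_Int) auto
    ultimately show ?thesis unfolding j_def using sD cQ by (simp add: Int_commute)
  qed
  then show "card (\<sigma> - Q) = card (Q - \<sigma>)" unfolding j_def by simp
  have Qe: "Q = {q. prime q \<and> q \<le> P}"
  proof -
    have "{..<?m} = {..?m - 1}" using m2 by auto
    then show ?thesis unfolding Q_def P_def using primes_le_pr[of "?m - 1"] by simp
  qed
  have Egt: "\<forall>e\<in>\<sigma> - Q. e > P" using f Qe by auto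
  have Mle: "\<forall>q\<in>Q - \<sigma>. q \<le> P" using Qe by auto
  have eqprod: "\<Prod>\<sigma> * \<Prod>(Q - \<sigma>) = \<Prod>Q * \<Prod>(\<sigma> - Q)"
  proof -
    have "\<Prod>\<sigma> * \<Prod>(Q - \<sigma>) = \<Prod>(\<sigma> \<union> (Q - \<sigma>))" using f fQ by (subst prod.union_disjoint) auto
    also have "\<sigma> \<union> (Q - \<sigma>) = Q \<union> (\<sigma> - Q)" by auto
    also have "\<Prod>(Q \<union> (\<sigma> - Q)) = \<Prod>Q * \<Prod>(\<sigma> - Q)" using f fQ by (subst prod.union_disjoint) auto
    finally show ?thesis .
  qed
  have Mb: "\<Prod>(Q - \<sigma>) \<le> P ^ j"
  proof -
    have "\<Prod>(Q - \<sigma>) \<le> (\<Prod>q\<in>Q - \<sigma>. P)" using Mle by (intro prod_mono) auto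
    then show ?thesis using cj by simp
  qed
  define t where "t = j div 2"
  have tj: "t \<le> j" "t \<le> j - t" unfolding t_def by auto
  have low: "real P ^ j * (1 + real t / real P) ^ (j - t) \<le> real (\<Prod>(\<sigma> - Q))"
    using lowerE[of "\<sigma> - Q" P t] f Egt P1 tj unfolding j_def by auto
  have QP: "real (\<Prod>Q) > 0" unfolding Q_def prodQ using pr_prime by (simp add: prime_gt_0_nat prod_pos)
  have nl: "real n < real (\<Prod>Q) * real (pr ?m)"
  proof -
    have "n < (\<Prod>i<?m+1. pr i)" by (rule n_less[OF n])
    also have "\<dots> = \<Prod>Q * pr ?m" unfolding Q_def prodQ by simp
    finally show ?thesis by (metis of_nat_less_iff of_nat_mult)
  qed
  have "real P ^ j * (1 + real t / real P) ^ (j - t) * real (\<Prod>Q) \<le> real (\<Prod>(\<sigma> - Q)) * real (\<Prod>Q)"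
    using low QP by (intro mult_right_mono) auto
  also have "\<dots> = real (\<Prod>\<sigma>) * real (\<Prod>(Q - \<sigma>))" using eqprod by (metis of_nat_mult mult.commute)
  also have "\<dots> \<le> real n * real P ^ j"
  proof -
    have a: "real (\<Prod>\<sigma>) \<le> real n" using f(3) by (simp only: of_nat_le_iff)
    have b: "real (\<Prod>(Q - \<sigma>)) \<le> real P ^ j" using Mb by (metis of_nat_le_iff of_nat_power)
    show ?thesis using a b by (intro mult_mono) (simp_all only: of_nat_0_le_iff)
  qed
  also have "\<dots> < real (\<Prod>Q) * real (pr ?m) * real P ^ j" using nl P1 by (intro mult_strict_right_mono) auto
  finally have "real P ^ j * ((1 + real t / real P) ^ (j - t) * real (\<Prod>Q)) < real P ^ j * (real (pr ?m) * real (\<Prod>Q))"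
    by (simp add: mult_ac)
  then have "(1 + real t / real P) ^ (j - t) * real (\<Prod>Q) < real (pr ?m) * real (\<Prod>Q)"
    using P1 by (simp add: mult_less_cancel_left)
  then have A: "(1 + real t / real P) ^ (j - t) < real (pr ?m)" using QP by simp
  have "(1 + real t / real P) ^ t \<le> (1 + real t / real P) ^ (j - t)"
    using tj by (intro power_increasing) auto
  also have "\<dots> \<le> exp (ln (real (pr ?m)))" using A pr_prime[of ?m] by (simp add: prime_gt_0_nat)
  finally have tb: "real t \<le> sqrt (2 * real P * ln (real (pr ?m))) + 2 * ln (real (pr ?m))"
    using P1 by (intro t_bound) auto
  have jt: "real j \<le> 2 * real t + 1" unfolding t_def by linarith
  have "real (card (\<sigma> - Q)) = real j" by (simp add: j_def)
  also have "\<dots> \<le> 2 * real t + 1" by (rule jt)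
  also have "\<dots> \<le> 2 * (sqrt (2 * real P * ln (real (pr ?m))) + 2 * ln (real (pr ?m))) + 1"
    using tb by simp
  finally show "real (card (\<sigma> - Q)) \<le> 2 * (sqrt (2 * real P * ln (real (pr (mm n)))) + 2 * ln (real (pr (mm n)))) + 1" .
qed


lemma card_TT:
  assumes n: "n \<ge> 1" and m2: "mm n \<ge> 2"
  defines "Jr \<equiv> 2 * (sqrt (2 * real (pr (mm n - 1)) * ln (real (pr (mm n)))) + 2 * ln (real (pr (mm n)))) + 1"
  defines "J \<equiv> nat \<lfloor>Jr\<rfloor>"
  shows "card (TT n) \<le> (J+1)^2 * (mm n)^J * (pr (mm n - 1) * pr (mm n))^J"
proof -
  define Q where "Q = pr ` {..<mm n}"
  define N where "N = pr (mm n - 1) * pr (mm n)"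
  define f where "f = (\<lambda>\<sigma>::nat set. (Q - \<sigma>, \<sigma> - Q))"
  define A1 where "A1 = {A. A \<subseteq> Q \<and> card A \<le> J}"
  define A2 where "A2 = {A. A \<subseteq> {..<N} \<and> card A \<le> J}"
  have fQ: "finite Q" and cQ: "card Q = mm n" unfolding Q_def using cardQ by auto
  have N1: "N \<ge> 1" unfolding N_def using pr_ge[of "mm n - 1"] pr_ge[of "mm n"]
    by (metis One_nat_def Suc_le_eq add_gr_0 mult_pos_pos zero_less_numeral le_add2 order_trans)
  have inj: "inj_on f (TT n)"
  proof (rule inj_onI)
    fix x y assume "f x = f y"
    then have "Q - x = Q - y" "x - Q = y - Q" unfolding f_def by auto
    moreover have "x = (Q - (Q - x)) \<union> (x - Q)" "y = (Q - (Q - y)) \<union> (y - Q)" by auto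
    ultimately show "x = y" by metis
  qed
  have img: "f ` TT n \<subseteq> A1 \<times> A2"
  proof
    fix z assume "z \<in> f ` TT n"
    then obtain \<sigma> where s: "\<sigma> \<in> TT n" and z: "z = f \<sigma>" by auto
    have jb: "real (card (\<sigma> - Q)) \<le> Jr" and ce: "card (\<sigma> - Q) = card (Q - \<sigma>)"
      using j_bound[OF n m2 s] unfolding Q_def Jr_def by auto
    have jJ: "card (\<sigma> - Q) \<le> J" unfolding J_def using jb by linarith
    have "\<sigma> - Q \<subseteq> {..<N}" using elem_bound[OF n _ s] m2 unfolding N_def by auto
    then show "z \<in> A1 \<times> A2" unfolding z f_def A1_def A2_def using jJ ce by auto
  qed
  have "card (TT n) = card (f ` TT n)" using inj by (simp add: card_image)
  also have "\<dots> \<le> card (A1 \<times> A2)"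
  proof (rule card_mono)
    have "A1 \<subseteq> Pow Q" unfolding A1_def by blast
    then have "finite A1" using fQ by (meson finite_Pow_iff finite_subset)
    moreover have "A2 \<subseteq> Pow {..<N}" unfolding A2_def by blast
    then have "finite A2" by (meson finite_Pow_iff finite_lessThan finite_subset)
    ultimately show "finite (A1 \<times> A2)" by simp
  qed (rule img)
  also have "\<dots> = card A1 * card A2" by (simp add: card_cartesian_product)
  also have "\<dots> \<le> ((J+1) * (mm n)^J) * ((J+1) * N^J)"
  proof (intro mult_le_mono)
    show "card A1 \<le> (J+1) * (mm n)^J" unfolding A1_def using card_subsle[OF fQ] cQ m2 by simp
    show "card A2 \<le> (J+1) * N^J" unfolding A2_def using card_subsle[of "{..<N}" J] N1 by simp
  qed
  also have "\<dots> = (J+1)^2 * (mm n)^J * N^J" by (simp only: power2_eq_square mult_ac)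
  finally show ?thesis unfolding N_def .
qed


lemma asym_main: "eventually (\<lambda>x::real.
   x * ln 2 + (2 * ln ((2 * (sqrt (2 * (16 * x * (ln x + 2)) * ln (16 * (x+1) * (ln (x+1) + 2))) + 2 * ln (16 * (x+1) * (ln (x+1) + 2))) + 1) + 1)
     + (2 * (sqrt (2 * (16 * x * (ln x + 2)) * ln (16 * (x+1) * (ln (x+1) + 2))) + 2 * ln (16 * (x+1) * (ln (x+1) + 2))) + 1)
       * (ln x + ln ((16 * x * (ln x + 2)) * (16 * (x+1) * (ln (x+1) + 2)))))
   + (1/64) * ((x+1) * ln (16 * (x+1) * (ln (x+1) + 2)) * ln (ln ((x+1) * ln (16 * (x+1) * (ln (x+1) + 2)))) / ln (x * ln 2))
   \<le> (x/2) * (ln (ln (x/2) - 1) - ln (ln 4))) at_top"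
  by real_asymp

lemma asym_E2: "eventually (\<lambda>x::real. 1 + ln 4 \<le> ln (x/2)) at_top"
  by real_asymp

lemma asym_E3: "eventually (\<lambda>x::real. exp 1 \<le> x * ln 2) at_top"
  by real_asymp


lemma sum_ln_fact: "(\<Sum>i<m. ln (real (i+1))) = ln (fact m)"
proof (induction m)
  case 0 then show ?case by simp
next
  case (Suc m)
  have "(\<Sum>i<Suc m. ln (real (i+1))) = ln (fact m) + ln (real (m+1))" using Suc by simp
  also have "\<dots> = ln (fact m * real (m+1))" by (simp add: ln_mult)
  also have "fact m * real (m+1) = fact (Suc m)" by (simp add: algebra_simps)
  finally show ?case .
qed

lemma sum_ln_lower:
  assumes m2: "m \<ge> 2" and E2: "1 + ln 4 \<le> ln (real m / 2)"
  defines "G \<equiv> ln (ln (real m / 2) - 1) - ln (ln 4)"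
  shows "G \<ge> 0" and "(\<Sum>i<m. ln (real (pr i))) \<ge> ln (fact m) + (real m / 2) * G"
proof -
  have l4: "ln (4::real) \<ge> 1" by (rule ln4_ge1)
  have G0: "G \<ge> 0" unfolding G_def using E2 l4 by (simp add: ln_mono)
  then show "G \<ge> 0" .
  have each: "ln (real (pr i)) \<ge> ln (real (i+1)) + (if m div 2 \<le> i then G else 0)" if i: "i < m" for i
  proof (cases "m div 2 \<le> i")
    case True
    define y where "y = real (i+1)"
    have ym: "y \<ge> real m / 2" unfolding y_def using True by linarith
    have ypos: "y > 0" unfolding y_def by simp
    have lym: "ln y \<ge> ln (real m / 2)" using ym m2 by (intro ln_mono) auto
    have ly: "ln y - 1 \<ge> ln 4" using lym E2 by linarith
    have pl: "real (pr i) * ln 4 \<ge> y * (ln y - 1)" using pr_lower[of i] unfolding y_def by (simp add: algebra_simps)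
    have pos1: "y * (ln y - 1) > 0" using ypos ly l4 by simp
    have "real (pr i) \<ge> y * (ln y - 1) / ln 4" using pl l4 by (simp add: field_simps)
    then have "ln (real (pr i)) \<ge> ln (y * (ln y - 1) / ln 4)"
      using pos1 l4 by (intro ln_mono) auto
    also have "ln (y * (ln y - 1) / ln 4) = ln y + ln (ln y - 1) - ln (ln 4)"
      using ypos ly l4 by (simp add: ln_mult ln_div)
    finally have A: "ln (real (pr i)) \<ge> ln y + ln (ln y - 1) - ln (ln 4)" .
    have "ln (ln y - 1) \<ge> ln (ln (real m / 2) - 1)" using lym E2 l4 by (intro ln_mono) auto
    then show ?thesis using A True unfolding G_def y_def by simp
  next
    case False
    have "real (i+1) \<le> real (pr i)" using pr_ge[of i] by simp
    then have "ln (real (i+1)) \<le> ln (real (pr i))" by (intro ln_mono) auto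
    then show ?thesis using False by simp
  qed
  have S1: "(\<Sum>i<m. ln (real (pr i))) \<ge> (\<Sum>i<m. ln (real (i+1)) + (if m div 2 \<le> i then G else 0))"
    using each by (intro sum_mono) auto
  have S2: "(\<Sum>i<m. ln (real (i+1)) + (if m div 2 \<le> i then G else 0))
      = ln (fact m) + (\<Sum>i<m. (if m div 2 \<le> i then G else 0))"
    by (simp only: sum.distrib sum_ln_fact)
  have S3: "(\<Sum>i<m. (if m div 2 \<le> i then G else 0)) = real (card {i\<in>{..<m}. m div 2 \<le> i}) * G"
    by (simp add: sum.If_cases Int_def)
  have S4: "{i\<in>{..<m}. m div 2 \<le> i} = {m div 2..<m}" by auto
  have S5: "real (card {m div 2..<m}) * G \<ge> (real m / 2) * G"
  proof -
    have "real (card {m div 2..<m}) = real m - real (m div 2)" by simp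
    also have "\<dots> \<ge> real m / 2" by linarith
    finally show ?thesis using G0 by (intro mult_right_mono) auto
  qed
  show "(\<Sum>i<m. ln (real (pr i))) \<ge> ln (fact m) + (real m / 2) * G"
    using S1 S2 S3 S4 S5 by simp
qed

lemma ln_n_lower: "n \<ge> 1 \<Longrightarrow> ln (real n) \<ge> (\<Sum>i<mm n. ln (real (pr i)))"
proof -
  assume n: "n \<ge> 1"
  have "(\<Sum>i<mm n. ln (real (pr i))) = ln (\<Prod>i<mm n. real (pr i))"
    using pr_prime by (subst ln_prod) (auto simp: prime_gt_0_nat)
  also have "\<dots> \<le> ln (real n)"
  proof (rule ln_mono)
    have "(\<Prod>i<mm n. real (pr i)) = real (\<Prod>i<mm n. pr i)" by simp
    also have "\<dots> \<le> real n" using lowerP[OF n] by (simp only: of_nat_le_iff)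
    finally show "(\<Prod>i<mm n. real (pr i)) \<le> real n" .
    show "0 < (\<Prod>i<mm n. real (pr i))" using pr_prime by (intro prod_pos) (simp add: prime_gt_0_nat)
  qed
  finally show ?thesis .
qed

lemma ln_n_lower2: "n \<ge> 1 \<Longrightarrow> ln (real n) \<ge> real (mm n) * ln 2"
proof -
  assume n: "n \<ge> 1"
  have "(\<Sum>i<mm n. ln (real (pr i))) \<ge> (\<Sum>i<mm n. ln 2)"
  proof (rule sum_mono)
    fix i have "2 \<le> real (pr i)" using pr_ge[of i] by simp
    then show "ln 2 \<le> ln (real (pr i))" by (intro ln_mono) auto
  qed
  then show ?thesis using ln_n_lower[OF n] by simp
qed

lemma ln_n_upper: "n \<ge> 1 \<Longrightarrow> ln (real n) \<le> real (mm n + 1) * ln (real (pr (mm n)))"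
proof -
  assume n: "n \<ge> 1"
  let ?m = "mm n"
  have "real n \<le> real (\<Prod>i<?m+1. pr i)" using n_less[OF n] by (simp only: of_nat_le_iff less_imp_le)
  also have "\<dots> \<le> real (pr ?m ^ (?m+1))"
  proof -
    have "(\<Prod>i<?m+1. pr i) \<le> (\<Prod>i<?m+1. pr ?m)" by (intro prod_mono) auto
    also have "\<dots> = pr ?m ^ (?m+1)" by simp
    finally show ?thesis by (simp only: of_nat_le_iff)
  qed
  finally have "ln (real n) \<le> ln (real (pr ?m ^ (?m+1)))" using n by (intro ln_mono) auto
  also have "\<dots> = real (?m+1) * ln (real (pr ?m))"
    using pr_prime[of ?m] by (simp only: of_nat_power, intro ln_realpow)
  finally show ?thesis .
qed


definition Pb :: "real \<Rightarrow> real" where "Pb x = 16 * x * (ln x + 2)"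
definition Rb :: "real \<Rightarrow> real" where "Rb x = 16 * (x+1) * (ln (x+1) + 2)"
definition Jb :: "real \<Rightarrow> real" where "Jb x = 2 * (sqrt (2 * Pb x * ln (Rb x)) + 2 * ln (Rb x)) + 1"
definition Fb :: "real \<Rightarrow> real" where "Fb x = 2 * ln (Jb x + 1) + Jb x * (ln x + ln (Pb x * Rb x))"
definition Xb :: "real \<Rightarrow> real" where "Xb x = (x+1) * ln (Rb x) * ln (ln ((x+1) * ln (Rb x))) / ln (x * ln 2)"
definition Gf :: "real \<Rightarrow> real" where "Gf x = ln (ln (x/2) - 1) - ln (ln 4)"

lemma asym_all: "eventually (\<lambda>x::real. x * ln 2 + Fb x + (1/64) * Xb x \<le> (x/2) * Gf x
   \<and> 1 + ln 4 \<le> ln (x/2) \<and> exp 1 \<le> x * ln 2 \<and> 2 \<le> x) at_top"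
proof -
  have a: "eventually (\<lambda>x::real. x * ln 2 + Fb x + (1/64) * Xb x \<le> (x/2) * Gf x) at_top"
    using asym_main unfolding Fb_def Jb_def Pb_def Rb_def Xb_def Gf_def .
  have b: "eventually (\<lambda>x::real. 2 \<le> x) at_top" by real_asymp
  show ?thesis using a asym_E2 asym_E3 b by eventually_elim auto
qed

lemma lnf_bound:
  assumes n: "n \<ge> 1" and m2: "mm n \<ge> 2"
  shows "ln (real (card (TT n))) \<le> Fb (real (mm n))"
proof -
  let ?m = "mm n"
  define x where "x = real ?m"
  have x2: "x \<ge> 2" unfolding x_def using m2 by simp
  define pm1 where "pm1 = real (pr (?m - 1))"
  define pm where "pm = real (pr ?m)"
  have pm1b: "pm1 \<le> Pb x"
    unfolding pm1_def Pb_def x_def using pr_upper[of "?m - 1"] m2 by simp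
  have pmb: "pm \<le> Rb x"
    unfolding pm_def Rb_def x_def using pr_upper[of "?m"] by (simp add: add.commute)
  have pm2: "pm \<ge> 2" unfolding pm_def using pr_ge[of ?m] by simp
  have pm12: "pm1 \<ge> 2" unfolding pm1_def using pr_ge[of "?m - 1"] by simp
  have lpm: "0 \<le> ln pm" "ln pm \<le> ln (Rb x)" using pm2 pmb by (simp, intro ln_mono, auto)
  define Jr where "Jr = 2 * (sqrt (2 * pm1 * ln pm) + 2 * ln pm) + 1"
  define J where "J = nat \<lfloor>Jr\<rfloor>"
  have Jr0: "Jr \<ge> 1" unfolding Jr_def using lpm pm12 by simp
  have JJr: "real J \<le> Jr" unfolding J_def using Jr0 by linarith
  have JrJb: "Jr \<le> Jb x"
  proof -
    have "2 * pm1 * ln pm \<le> 2 * Pb x * ln (Rb x)"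
      using pm1b lpm pm12 by (intro mult_mono) auto
    then have sq: "sqrt (2 * pm1 * ln pm) \<le> sqrt (2 * Pb x * ln (Rb x))" by (rule real_sqrt_le_mono)
    have "sqrt (2 * pm1 * ln pm) + 2 * ln pm \<le> sqrt (2 * Pb x * ln (Rb x)) + 2 * ln (Rb x)"
      using sq lpm(2) by (intro add_mono) auto
    then show ?thesis unfolding Jr_def Jb_def by simp
  qed
  have JJb: "real J \<le> Jb x" using JJr JrJb by simp
  define N where "N = pr (?m - 1) * pr ?m"
  have Nb: "real N \<le> Pb x * Rb x" unfolding N_def using pm1b pmb pm12 pm2
    unfolding pm1_def pm_def by (simp, intro mult_mono, auto)
  have N1: "real N \<ge> 1"
  proof -
    have "pr (?m-1) \<ge> 1" "pr ?m \<ge> 1" using pr_ge[of "?m-1"] pr_ge[of ?m] by auto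
    then have "N \<ge> 1" unfolding N_def by (simp add: one_le_mult_iff)
    then show ?thesis by simp
  qed
  have cT: "card (TT n) \<le> (J+1)^2 * ?m^J * N^J"
    using card_TT[OF n m2] unfolding J_def Jr_def N_def pm_def pm1_def by simp
  have fin: "finite (TT n)" unfolding TT_def using fin_Delta by simp
  have c1: "card (TT n) \<ge> 1" using TT_ne[OF n] fin by (simp add: Suc_le_eq card_gt_0_iff)
  have cTr: "real (card (TT n)) \<le> real ((J+1)^2 * ?m^J * N^J)" using cT by (simp only: of_nat_le_iff)
  have "ln (real (card (TT n))) \<le> ln (real ((J+1)^2 * ?m^J * N^J))"
    using cTr c1 by (intro ln_mono) auto
  also have "\<dots> = 2 * ln (real J + 1) + real J * ln x + real J * ln (real N)"
    using m2 N1 unfolding x_def by (simp add: ln_mult ln_realpow add.commute)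
  also have "\<dots> \<le> 2 * ln (Jb x + 1) + Jb x * ln x + Jb x * ln (Pb x * Rb x)"
  proof -
    have "ln (real J + 1) \<le> ln (Jb x + 1)" using JJb by (intro ln_mono) auto
    moreover have "real J * ln x \<le> Jb x * ln x" using JJb x2 by (intro mult_right_mono) auto
    moreover have "real J * ln (real N) \<le> Jb x * ln (Pb x * Rb x)"
      using JJb N1 Nb by (intro mult_mono ln_mono) auto
    ultimately show ?thesis by linarith
  qed
  also have "\<dots> = Fb x" unfolding Fb_def by (simp add: algebra_simps)
  finally show ?thesis unfolding x_def .
qed


lemma X_bound:
  assumes n: "n \<ge> 1" and E3: "exp 1 \<le> real (mm n) * ln 2"
  shows "ln (real n) * ln (ln (ln (real n))) / ln (ln (real n)) \<le> Xb (real (mm n))"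
proof -
  define x where "x = real (mm n)"
  define L where "L = ln (real n)"
  define U where "U = (x+1) * ln (Rb x)"
  have e1: "exp 1 \<ge> (1::real)" by simp
  have Lx: "L \<ge> x * ln 2" unfolding L_def x_def using ln_n_lower2[OF n] by simp
  have x0: "x * ln 2 > 0" using E3 unfolding x_def by (metis exp_gt_zero order_less_le_trans)
  have lx1: "ln (x * ln 2) \<ge> 1" using E3 x0 unfolding x_def by (subst ln_ge_iff) auto
  have L0: "L > 0" using Lx x0 by simp
  have lL: "ln L \<ge> ln (x * ln 2)" using Lx x0 by (intro ln_mono) auto
  have lL1: "ln L \<ge> 1" using lL lx1 by simp
  have LU: "L \<le> U"
  proof -
    have "L \<le> real (mm n + 1) * ln (real (pr (mm n)))" unfolding L_def by (rule ln_n_upper[OF n])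
    also have "\<dots> \<le> (x+1) * ln (Rb x)"
    proof (intro mult_mono)
      show "real (mm n + 1) \<le> x + 1" unfolding x_def by simp
      have "real (pr (mm n)) \<le> Rb x" unfolding Rb_def x_def using pr_upper[of "mm n"] by (simp add: add.commute)
      moreover have "real (pr (mm n)) > 0" using pr_ge[of "mm n"] by simp
      ultimately show "ln (real (pr (mm n))) \<le> ln (Rb x)" by (intro ln_mono) auto
      show "0 \<le> x + 1" unfolding x_def by simp
      show "0 \<le> ln (real (pr (mm n)))" using pr_ge[of "mm n"] by simp
    qed
    finally show ?thesis unfolding U_def .
  qed
  have llL: "ln (ln L) \<ge> 0" using lL1 by simp
  have lU: "ln L \<le> ln U" using LU L0 by (intro ln_mono) auto
  have lLpos: "0 < ln L" using lL1 by simp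
  have L1: "1 \<le> L" using Lx E3 e1 unfolding x_def by linarith
  have llU: "ln (ln L) \<le> ln (ln U)" by (rule ln_mono[OF lU lLpos])
  have "L * ln (ln L) / ln L \<le> U * ln (ln U) / ln L"
    using LU llU llL L0 lL1 L1 by (intro divide_right_mono mult_mono) auto
  also have "\<dots> \<le> U * ln (ln U) / ln (x * ln 2)"
  proof -
    have llU0: "0 \<le> ln (ln U)" using llL llU by linarith
    have pos: "0 < ln L * ln (x * ln 2)" using lLpos lx1 by simp
    show ?thesis using lL LU L0 llU0 pos by (intro divide_left_mono mult_nonneg_nonneg) auto
  qed
  also have "\<dots> = Xb x" unfolding Xb_def U_def by simp
  finally show ?thesis unfolding L_def x_def .
qed

lemma chi_pointwise:
  assumes n: "n \<ge> 2" and m3: "mm n \<ge> 3"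
    and al: "\<bar>alpha n\<bar> \<le> c * (fact (dimc (Delta n) + 1))\<^sup>2" and c: "c > 0"
    and main: "real (mm n) * ln 2 + Fb (real (mm n)) + (1/64) * Xb (real (mm n)) \<le> (real (mm n)/2) * Gf (real (mm n))"
    and E2: "1 + ln 4 \<le> ln (real (mm n)/2)" and E3: "exp 1 \<le> real (mm n) * ln 2"
  shows "\<bar>real_of_int (red_euler (Delta n))\<bar> \<le>
     (2 * c) * (real n * exp (- (1/64) * (ln (real n) * ln (ln (ln (real n))) / ln (ln (real n)))))"
proof -
  let ?m = "mm n"
  define x where "x = real ?m"
  have n1: "n \<ge> 1" using n by simp
  have m2: "?m \<ge> 2" using m3 by simp
  define chi where "chi = real_of_int (red_euler (Delta n))"
  define H where "H = Hcoef 1 (?m - 1)"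
  define f where "f = real (card (TT n))"
  have dimc: "dimc (Delta n) = ?m - 1" by (rule dimc_eq)
  have dm: "dimc (Delta n) + 1 = ?m" using dimc m2 by simp
  have fv: "fvec (Delta n) (dimc (Delta n)) = card (TT n)" using m2 by (intro fvec_eq) simp
  have H0: "H > 0" unfolding H_def using m2 by (intro Hcoef1_pos) simp
  have Hb: "H \<le> 2 ^ ?m / (fact ?m - 1)" unfolding H_def using Hcoef1_le[of "?m - 1"] m2 by simp
  have fin: "finite (TT n)" unfolding TT_def using fin_Delta by simp
  have f1: "f \<ge> 1" unfolding f_def using TT_ne[OF n1] fin by (simp add: Suc_le_eq card_gt_0_iff)
  have alpha_eq: "alpha n = chi / (H * f)"
    unfolding alpha_def fv unfolding dimc chi_def H_def f_def ..
  have chi_eq: "chi = alpha n * (H * f)" using alpha_eq H0 f1 by simp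
  have fm2: "fact ?m \<ge> (2::real)"
  proof -
    have "(fact 2 :: real) \<le> fact ?m" using m2 by (intro fact_mono) auto
    then show ?thesis by simp
  qed
  have al': "\<bar>alpha n\<bar> \<le> c * (fact ?m)\<^sup>2" using al unfolding dm .
  have "\<bar>chi\<bar> = \<bar>alpha n\<bar> * H * f" using chi_eq H0 f1 by (simp add: abs_mult)
  also have "\<dots> \<le> c * (fact ?m)\<^sup>2 * (2 ^ ?m / (fact ?m - 1)) * f"
    using al' H0 Hb f1 c by (intro mult_mono) auto
  also have "\<dots> \<le> c * (2 * fact ?m * 2 ^ ?m) * f"
  proof -
    have key: "(fact ?m :: real)\<^sup>2 * (2 ^ ?m / (fact ?m - 1)) \<le> 2 * fact ?m * 2 ^ ?m"
    proof -
      have "(fact ?m :: real)\<^sup>2 \<le> 2 * fact ?m * (fact ?m - 1)"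
        using mult_nonneg_nonneg[of "fact ?m :: real" "fact ?m - 2"] fm2 by (simp add: power2_eq_square algebra_simps)
      then have "(fact ?m :: real)\<^sup>2 / (fact ?m - 1) \<le> 2 * fact ?m" using fm2 by (simp add: divide_le_eq)
      then have "(fact ?m :: real)\<^sup>2 / (fact ?m - 1) * 2 ^ ?m \<le> 2 * fact ?m * 2 ^ ?m"
        by (rule mult_right_mono) simp
      moreover have "(fact ?m :: real)\<^sup>2 * (2 ^ ?m / (fact ?m - 1)) = (fact ?m)\<^sup>2 / (fact ?m - 1) * 2 ^ ?m"
        by (simp only: times_divide_eq_right times_divide_eq_left)
      ultimately show ?thesis by simp
    qed
    have "c * ((fact ?m)\<^sup>2 * (2 ^ ?m / (fact ?m - 1))) \<le> c * (2 * fact ?m * 2 ^ ?m)"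
      using key c by (intro mult_left_mono) auto
    then have "c * ((fact ?m)\<^sup>2 * (2 ^ ?m / (fact ?m - 1))) * f \<le> c * (2 * fact ?m * 2 ^ ?m) * f"
      using f1 by (intro mult_right_mono) auto
    then show ?thesis by (simp only: mult.assoc)
  qed
  also have "\<dots> = (2 * c) * exp (ln (fact ?m) + x * ln 2 + ln f)"
    using f1 fm2 unfolding x_def by (simp add: exp_add exp_of_nat_mult powr_realpow)
  also have "\<dots> \<le> (2 * c) * (real n * exp (- (1/64) * (ln (real n) * ln (ln (ln (real n))) / ln (ln (real n)))))"
  proof -
    define X where "X = ln (real n) * ln (ln (ln (real n))) / ln (ln (real n))"
    have XX: "X \<le> Xb x" unfolding X_def x_def by (rule X_bound[OF n1 E3])
    have lf: "ln f \<le> Fb x" unfolding f_def x_def by (rule lnf_bound[OF n1 m2])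
    have G: "Gf x \<ge> 0" and S: "(\<Sum>i<?m. ln (real (pr i))) \<ge> ln (fact ?m) + (x / 2) * Gf x"
      using sum_ln_lower[OF m2 E2] unfolding Gf_def x_def by auto
    have ln_n: "ln (real n) \<ge> ln (fact ?m) + (x/2) * Gf x" using S ln_n_lower[OF n1] by linarith
    have "ln (fact ?m) + x * ln 2 + ln f \<le> ln (real n) - (1/64) * X"
      using main lf XX ln_n unfolding x_def by linarith
    then have "exp (ln (fact ?m) + x * ln 2 + ln f) \<le> exp (ln (real n) - (1/64) * X)" by simp
    also have "\<dots> = real n * exp (- (1/64) * X)"
    proof -
      have "exp (ln (real n) - (1/64) * X) = exp (ln (real n)) / exp ((1/64) * X)" by (rule exp_diff)
      also have "\<dots> = real n / exp ((1/64) * X)" using n by simp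
      also have "\<dots> = real n * exp (- ((1/64) * X))" by (simp only: exp_minus divide_inverse)
      finally show ?thesis by simp
    qed
    finally show ?thesis using c unfolding X_def by (intro mult_left_mono) auto
  qed
  finally show ?thesis unfolding chi_def .
qed


theorem proposition1p4:
  assumes "alpha \<in> O(\<lambda>n. (fact (dimc (Delta n) + 1))\<^sup>2)"
  shows "\<exists>A>0. (\<lambda>n. real_of_int (red_euler (Delta n))) \<in>
           O(\<lambda>n. real n * exp (- A * (ln (real n) * ln (ln (ln (real n))) / ln (ln (real n)))))"
proof -
  from assms obtain c where c: "c > 0"
    and ev: "eventually (\<lambda>n. norm (alpha n) \<le> c * norm ((fact (dimc (Delta n) + 1))\<^sup>2 :: real)) at_top"
    by (elim landau_o.bigE)
  obtain x0 where x0: "\<And>x. x \<ge> x0 \<Longrightarrow> (x * ln 2 + Fb x + (1/64) * Xb x \<le> (x/2) * Gf x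
   \<and> 1 + ln 4 \<le> ln (x/2) \<and> exp 1 \<le> x * ln 2 \<and> 2 \<le> x)"
    using asym_all unfolding eventually_at_top_linorder by auto
  define M0 where "M0 = max 3 (nat \<lceil>x0\<rceil>)"
  have ev2: "eventually (\<lambda>n. mm n \<ge> M0) at_top" by (rule mm_eventually)
  have ev3: "eventually (\<lambda>n::nat. n \<ge> 2) at_top" by (rule eventually_ge_at_top)
  have "(\<lambda>n. real_of_int (red_euler (Delta n))) \<in>
           O(\<lambda>n. real n * exp (- (1/64) * (ln (real n) * ln (ln (ln (real n))) / ln (ln (real n)))))"
  proof (rule landau_o.bigI[of "2*c"])
    show "0 < 2 * c" using c by simp
    show "eventually (\<lambda>n. norm (real_of_int (red_euler (Delta n))) \<le> 2 * c *
      norm (real n * exp (- (1/64) * (ln (real n) * ln (ln (ln (real n))) / ln (ln (real n)))))) at_top"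
      using ev ev2 ev3
    proof eventually_elim
      case (elim n)
      have m3: "mm n \<ge> 3" using elim(2) unfolding M0_def by simp
      have mx: "real (mm n) \<ge> x0" using elim(2) unfolding M0_def by linarith

      have al: "\<bar>alpha n\<bar> \<le> c * (fact (dimc (Delta n) + 1))\<^sup>2" using elim(1) by simp
      have "\<bar>real_of_int (red_euler (Delta n))\<bar> \<le>
         (2 * c) * (real n * exp (- (1/64) * (ln (real n) * ln (ln (ln (real n))) / ln (ln (real n)))))"
        using x0[OF mx] by (intro chi_pointwise[OF elim(3) m3 al c]) auto
      then show ?case by simp
    qed
  qed
  then show ?thesis by (intro exI[of _ "1/64"]) auto
qed


end
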